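(* Let $\mathcal S=\{\|\cdot\|_t;\ t\ge1\}$ be a family of norms on $\mathbb R^d$ and let $\mathcal S'=\{\|\cdot\|_n;\ n\in\mathbb N\}$. Assume that there exist $K,a>0$ such that $$\|T(t,s)x\|_t\le K\Big(\frac ts\Big)^a\|x\|_s\quad\text{and}\quad \|T(s,t)x\|_s\le K\Big(\frac ts\Big)^a\|x\|_t\qquad\text{for all } t\ge s\ge1,\ x\in\mathbb R^d.$$ Then $$\Sigma_{PD,A(\cdot),\mathcal S}=\Sigma_{PD,\mathbb A,\mathcal S'},$$ where $\mathbb A=(A_n)_{n\in\mathbb N}$ is given by $A_n=T(n+1,n)$. In particular, $$\Sigma_{PD,A(\cdot),\mathcal S}=\bigcup_{i=1}^r\Big[\frac{\log a_i}{\log 2},\frac{\log b_i}{\log 2}\Big]$$ for some $1\le r\le d$ and $0<a_1\le b_1<a_2\le\dots<a_r\le b_r$.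
   Context: $A\colon[1,\infty)\to\mathbb R^{d\times d}$ is continuous and $T(t,s)$ denotes the evolution family of $x'=A(t)x$, $t\ge1$. The equation admits a strong polynomial dichotomy with respect to $\mathcal S$ if there exist $K>0$, $a\ge\lambda>0$ and projections $P(t)$ with $P(t)T(t,s)=T(t,s)P(s)$ and, for $t\ge s\ge1$, $\|T(t,s)P(s)x\|_t\le K(t/s)^{-\lambda}\|x\|_s$, $\|T(s,t)(\mathrm{Id}-P(t))x\|_s\le K(t/s)^{-\lambda}\|x\|_t$, together with the two bounded-growth estimates above. $\Sigma_{PD,A(\cdot),\mathcal S}$ is the set of $\tau\in\mathbb R$ for which $x'=(A(t)-\frac{\tau}{t}\mathrm{Id})x$ does not admit a strong polynomial dichotomy with respect to $\mathcal S$. For a sequence $\mathbb A=(A_n)_{n\in\mathbb N}$ of invertible operators with $\mathcal A(m,n)=A_{m-1}\cdots A_n$ ($m>n$), $\mathcal A(n,n)=\mathrm{Id}$, $\mathcal A(m,n)=A_m^{-1}\cdots A_{n-1}^{-1}$ ($m<n$), a strong polynomial dichotomy with respect to $\{\|\cdot\|_n\}$ means projections $P_n$ with $A_nP_n=P_{n+1}A_n$ and, for $m\ge n$, $\|\mathcal A(m,n)P_nx\|_m\le K(m/n)^{-\lambda}\|x\|_n$, $\|\mathcal A(n,m)(\mathrm{Id}-P_m)x\|_n\le K(m/n)^{-\lambda}\|x\|_m$, $\|\mathcal A(m,n)x\|_m\le K(m/n)^a\|x\|_n$, $\|\mathcal A(n,m)x\|_n\le K(m/n)^a\|x\|_m$;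 and $\Sigma_{PD,\mathbb A,\mathcal S'}$ is the set of $\tau\in\mathbb R$ such that $\big((\frac{n+1}{n})^{-\tau}A_n\big)_{n\in\mathbb N}$ does not admit a strong polynomial dichotomy with respect to $\mathcal S'$. *)

theory Defs
  imports "HOL-Analysis.Analysis"
begin

definition is_norm :: "(real^'d \<Rightarrow> real) \<Rightarrow> bool" where
  "is_norm nf \<longleftrightarrow>
     (\<forall>x. nf x = 0 \<longleftrightarrow> x = 0) \<and>
     (\<forall>c x. nf (c *\<^sub>R x) = \<bar>c\<bar> * nf x) \<and>
     (\<forall>x y. nf (x + y) \<le> nf x + nf y)"

definition evol_family :: "(real \<Rightarrow> real^'d^'d) \<Rightarrow> (real \<Rightarrow> real \<Rightarrow> real^'d^'d) \<Rightarrow> bool" where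
  "evol_family B T \<longleftrightarrow>
     (\<forall>s\<ge>1. T s s = mat 1 \<and>
        (\<forall>t\<ge>1. ((\<lambda>u. T u s) has_vector_derivative (B t ** T t s)) (at t within {1..})))"

definition spd_family :: "(real \<Rightarrow> real \<Rightarrow> real^'d^'d) \<Rightarrow> (real \<Rightarrow> real^'d \<Rightarrow> real) \<Rightarrow> bool" where
  "spd_family T N \<longleftrightarrow>
     (\<exists>P :: real \<Rightarrow> real^'d^'d. \<exists>K lam a :: real. K > 0 \<and> 0 < lam \<and> lam \<le> a \<and>
        (\<forall>t\<ge>1. P t ** P t = P t) \<and>
        (\<forall>t\<ge>1. \<forall>s\<ge>1. P t ** T t s = T t s ** P s) \<and>
        (\<forall>t s x. 1 \<le> s \<and> s \<le> t \<longrightarrow>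
           N t (T t s *v (P s *v x)) \<le> K * (t / s) powr (- lam) * N s x \<and>
           N s (T s t *v ((mat 1 - P t) *v x)) \<le> K * (t / s) powr (- lam) * N t x \<and>
           N t (T t s *v x) \<le> K * (t / s) powr a * N s x \<and>
           N s (T s t *v x) \<le> K * (t / s) powr a * N t x))"

text \<open>The equation x' = B(t) x admits a strong polynomial dichotomy (w.r.t. N)
  (its evolution family is unique, so "some" = "the").\<close>
definition ode_spd :: "(real \<Rightarrow> real^'d^'d) \<Rightarrow> (real \<Rightarrow> real^'d \<Rightarrow> real) \<Rightarrow> bool" where
  "ode_spd B N \<longleftrightarrow> (\<exists>T. evol_family B T \<and> spd_family T N)"

definition ode_spectrum :: "(real \<Rightarrow> real^'d^'d) \<Rightarrow> (real \<Rightarrow> real^'d \<Rightarrow> real) \<Rightarrow> real set" where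
  "ode_spectrum A N = {\<tau>. \<not> ode_spd (\<lambda>t. A t - (\<tau> / t) *\<^sub>R mat 1) N}"

text \<open>Discrete cocycle: fwd As n k = A_(n+k-1) ... A_n, bwd As m k = A_m^-1 ... A_(m+k-1)^-1.\<close>
fun fwd :: "(nat \<Rightarrow> real^'d^'d) \<Rightarrow> nat \<Rightarrow> nat \<Rightarrow> real^'d^'d" where
  "fwd As n 0 = mat 1"
| "fwd As n (Suc k) = As (n + k) ** fwd As n k"

fun bwd :: "(nat \<Rightarrow> real^'d^'d) \<Rightarrow> nat \<Rightarrow> nat \<Rightarrow> real^'d^'d" where
  "bwd As m 0 = mat 1"
| "bwd As m (Suc k) = bwd As m k ** matrix_inv (As (m + k))"

definition cocycle :: "(nat \<Rightarrow> real^'d^'d) \<Rightarrow> nat \<Rightarrow> nat \<Rightarrow> real^'d^'d" where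
  "cocycle As m n = (if n \<le> m then fwd As n (m - n) else bwd As m (n - m))"

definition seq_spd :: "(nat \<Rightarrow> real^'d^'d) \<Rightarrow> (nat \<Rightarrow> real^'d \<Rightarrow> real) \<Rightarrow> bool" where
  "seq_spd As N \<longleftrightarrow>
     (\<exists>P :: nat \<Rightarrow> real^'d^'d. \<exists>K lam a :: real. K > 0 \<and> 0 < lam \<and> lam \<le> a \<and>
        (\<forall>n\<ge>1. P n ** P n = P n \<and> As n ** P n = P (Suc n) ** As n) \<and>
        (\<forall>m n x. 1 \<le> n \<and> n \<le> m \<longrightarrow>
           N m (cocycle As m n *v (P n *v x)) \<le> K * (real m / real n) powr (- lam) * N n x \<and>
           N n (cocycle As n m *v ((mat 1 - P m) *v x)) \<le> K * (real m / real n) powr (- lam) * N m x \<and>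
           N m (cocycle As m n *v x) \<le> K * (real m / real n) powr a * N n x \<and>
           N n (cocycle As n m *v x) \<le> K * (real m / real n) powr a * N m x))"

definition seq_spectrum :: "(nat \<Rightarrow> real^'d^'d) \<Rightarrow> (nat \<Rightarrow> real^'d \<Rightarrow> real) \<Rightarrow> real set" where
  "seq_spectrum As N = {\<tau>. \<not> seq_spd (\<lambda>n. ((real n + 1) / real n) powr (- \<tau>) *\<^sub>R As n) N}"

end

theory Submission
  imports Defs
begin

lemma mm_add_r: "((A::real^'n^'n) + B) ** C = A ** C + B ** C"
  by (simp add: matrix_matrix_mult_def vec_eq_iff sum.distrib algebra_simps)
lemma mm_diff_r: "((A::real^'n^'n) - B) ** C = A ** C - B ** C"
  by (simp add: matrix_matrix_mult_def vec_eq_iff sum_subtractf algebra_simps)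
lemma mm_diff_l: "(C::real^'n^'n) ** (A - B) = C ** A - C ** B"
  by (simp add: matrix_matrix_mult_def vec_eq_iff sum_subtractf algebra_simps)

lemma bilinear_matmul: "bilinear ((**) :: real^'n^'n \<Rightarrow> real^'n^'n \<Rightarrow> real^'n^'n)"
  unfolding bilinear_def linear_iff
  by (simp add: matrix_add_ldistrib mm_add_r matrix_scalar_ac flip: scalar_matrix_assoc)

lemma matmul_norm: "\<exists>C>0. \<forall>(X::real^'n^'n) (Y::real^'n^'n). norm (X ** Y) \<le> C * norm X * norm Y"
  by (rule bilinear_bounded_pos[OF bilinear_matmul])

lemma is_norm_nonneg: assumes "is_norm nf" shows "0 \<le> nf x"
proof -
  have "nf (x + (-1) *\<^sub>R x) \<le> nf x + nf ((-1) *\<^sub>R x)" using assms unfolding is_norm_def by (elim conjE) (rule spec2)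
  moreover have "nf ((-1) *\<^sub>R x) = nf x" using assms unfolding is_norm_def by (metis abs_minus_cancel abs_one mult_1)
  moreover have "nf 0 = 0" using assms unfolding is_norm_def by simp
  ultimately show ?thesis by simp
qed

lemma is_norm_zero: assumes "is_norm nf" shows "nf 0 = 0"
  using assms unfolding is_norm_def by simp

lemma is_norm_scale: assumes "is_norm nf" shows "nf (c *\<^sub>R x) = \<bar>c\<bar> * nf x"
  using assms unfolding is_norm_def by simp

lemma is_norm_eq0: assumes "is_norm nf" shows "nf x = 0 \<longleftrightarrow> x = 0"
  using assms unfolding is_norm_def by simp

lemma ode_step:
  fixes Z :: "real \<Rightarrow> real^'n^'n"
  assumes der: "\<And>u. u \<in> {p..q} \<Longrightarrow> (Z has_vector_derivative (B u ** Z u)) (at u within {p..q})"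
    and Bb: "\<And>u. u \<in> {p..q} \<Longrightarrow> C * norm (B u) \<le> M"
    and C: "\<And>(X::real^'n^'n) (Y::real^'n^'n). norm (X ** Y) \<le> C * norm X * norm Y"
    and M: "M * (q - p) \<le> 1/2" "0 \<le> M"
    and z: "Z p = 0 \<or> Z q = 0" and pq: "p \<le> q"
  shows "\<forall>u\<in>{p..q}. Z u = 0"
proof -
  have cont: "continuous_on {p..q} Z"
    by (rule continuous_on_vector_derivative[OF der])
  have "\<exists>u0\<in>{p..q}. \<forall>u\<in>{p..q}. norm (Z u) \<le> norm (Z u0)"
    by (rule continuous_attains_sup) (use pq cont in \<open>auto intro: continuous_on_norm\<close>)
  then obtain u0 where u0: "u0 \<in> {p..q}" and mx: "\<forall>u\<in>{p..q}. norm (Z u) \<le> norm (Z u0)"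
    by blast
  let ?m = "norm (Z u0)"
  have bnd: "norm (B u ** Z u) \<le> M * ?m" if "u \<in> {p..q}" for u
  proof -
    have "norm (B u ** Z u) \<le> C * norm (B u) * norm (Z u)" by (rule C)
    also have "\<dots> \<le> M * ?m"
      using Bb[OF that] mx that M(2) by (intro mult_mono) auto
    finally show ?thesis .
  qed
  have key: "norm (Z x - Z y) \<le> (M * ?m) * norm (x - y)" if "x \<in> {p..q}" "y \<in> {p..q}" for x y
  proof (rule differentiable_bound[where f' = "\<lambda>u h. h *\<^sub>R (B u ** Z u)"])
    show "convex {p..q}" by simp
    show "(Z has_derivative (\<lambda>h. h *\<^sub>R (B u ** Z u))) (at u within {p..q})" if "u \<in> {p..q}" for u
      using der[OF that] unfolding has_vector_derivative_def .
    show "onorm (\<lambda>h. h *\<^sub>R (B u ** Z u)) \<le> M * ?m" if "u \<in> {p..q}" for u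
    proof (rule onorm_bound)
      show "0 \<le> M * ?m" using M(2) by simp
      fix h :: real
      show "norm (h *\<^sub>R (B u ** Z u)) \<le> M * ?m * norm h"
        using bnd[OF that] by (simp add: mult_left_mono mult.commute)
    qed
  qed (use that in auto)
  obtain w where w: "w \<in> {p..q}" "Z w = 0" using z pq by auto
  have "?m = norm (Z u0 - Z w)" using w by simp
  also have "\<dots> \<le> (M * ?m) * norm (u0 - w)" using key u0 w by blast
  also have "\<dots> \<le> (M * ?m) * (q - p)"
  proof (rule mult_left_mono)
    show "norm (u0 - w) \<le> q - p" using u0 w by (simp add: abs_le_iff)
    show "0 \<le> M * ?m" using M(2) by simp
  qed
  also have "\<dots> = ?m * (M * (q - p))" by (simp only: mult_ac)
  also have "\<dots> \<le> ?m * (1/2)" using M(1) by (intro mult_left_mono) simp_all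
  finally have "?m = 0" by simp
  then show ?thesis using mx by auto
qed

lemma ode_zero:
  fixes Z :: "real \<Rightarrow> real^'n^'n"
  assumes contB: "continuous_on {1..} B"
    and der: "\<And>u. u \<ge> 1 \<Longrightarrow> (Z has_vector_derivative (B u ** Z u)) (at u within {1..})"
    and s: "s \<ge> 1" "Z s = 0" and t: "t \<ge> 1"
  shows "Z t = 0"
proof -
  define L where "L = max s t"
  obtain C where C: "C > 0" "\<And>(X::real^'n^'n) (Y::real^'n^'n). norm (X ** Y) \<le> C * norm X * norm Y"
    using matmul_norm by blast
  have "compact (B ` {1..L})"
    by (rule compact_continuous_image) (auto intro: continuous_on_subset[OF contB])
  then obtain Mb where Mb: "\<And>u. u \<in> {1..L} \<Longrightarrow> norm (B u) \<le> Mb"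
    using compact_imp_bounded bounded_iff by (metis image_eqI)
  define M where "M = C * max Mb 0 + 1"
  have Mpos: "M > 0" unfolding M_def using C(1) by (intro add_nonneg_pos mult_nonneg_nonneg) auto
  define h where "h = 1 / (2 * M)"
  have hpos: "h > 0" using Mpos unfolding h_def by simp
  have Mh: "M * h = 1/2" using Mpos unfolding h_def by simp
  have Bb: "C * norm (B u) \<le> M" if "u \<in> {1..L}" for u
  proof -
    have "C * norm (B u) \<le> C * max Mb 0" using Mb[OF that] C by (intro mult_left_mono) auto
    then show ?thesis unfolding M_def by simp
  qed
  have step: "\<forall>u\<in>{p..q}. Z u = 0" if "1 \<le> p" "p \<le> q" "q \<le> L" "q - p \<le> h" "Z p = 0 \<or> Z q = 0" for p q
  proof (rule ode_step[where B = B and C = C and M = M])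
    show "(Z has_vector_derivative B u ** Z u) (at u within {p..q})" if "u \<in> {p..q}" for u
      using der[of u] that \<open>1 \<le> p\<close> by (auto intro: has_vector_derivative_within_subset)
    show "C * norm (B u) \<le> M" if "u \<in> {p..q}" for u using Bb that \<open>1 \<le> p\<close> \<open>q \<le> L\<close> by auto
    show "M * (q - p) \<le> 1/2" using Mh \<open>q - p \<le> h\<close> Mpos
      by (metis mult_left_mono less_imp_le)
  qed (use that C Mpos in auto)
  have fwd: "\<forall>u\<in>{s..min (s + real k * h) L}. Z u = 0" for k :: nat
  proof (induction k)
    case 0
    then show ?case using s by auto
  next
    case (Suc k)
    define p where "p = min (s + real k * h) L"
    define q where "q = min (s + real (Suc k) * h) L"
    have sp: "s \<le> p" unfolding p_def L_def using hpos by auto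
    have Zp: "Z p = 0" using Suc sp unfolding p_def by auto
    have "\<forall>u\<in>{p..q}. Z u = 0"
      by (rule step) (use sp s Zp hpos in \<open>auto simp: p_def q_def L_def algebra_simps intro: add_increasing2\<close>)
    then show ?case using Suc unfolding q_def p_def by (metis atLeastAtMost_iff linorder_le_cases)
  qed
  have bwd: "\<forall>u\<in>{max (s - real k * h) 1..s}. Z u = 0" for k :: nat
  proof (induction k)
    case 0
    then show ?case using s by auto
  next
    case (Suc k)
    define q where "q = max (s - real k * h) 1"
    define p where "p = max (s - real (Suc k) * h) 1"
    have sq: "q \<le> s" unfolding q_def using hpos s by auto
    have Zq: "Z q = 0" using Suc sq unfolding q_def by auto
    have "\<forall>u\<in>{p..q}. Z u = 0"
      by (rule step) (use sq s Zq hpos in \<open>auto simp: p_def q_def L_def algebra_simps intro: add_increasing2 order_trans[OF max.cobounded1]\<close>)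
    then show ?case using Suc unfolding q_def p_def by (metis atLeastAtMost_iff linorder_le_cases)
  qed
  obtain k :: nat where k: "L / h \<le> real k" using real_arch_simple by blast
  have kh: "L \<le> real k * h" using k hpos by (simp add: pos_divide_le_eq)
  show ?thesis
  proof (cases "s \<le> t")
    case True
    have "t \<le> min (s + real k * h) L" using kh True s unfolding L_def by auto
    then show ?thesis using fwd[of k] True by auto
  next
    case False
    have "max (s - real k * h) 1 \<le> t" using kh t s unfolding L_def by auto
    then show ?thesis using bwd[of k] False by auto
  qed
qed

lemma bb_matmul: "bounded_bilinear ((**) :: real^'n^'n \<Rightarrow> real^'n^'n \<Rightarrow> real^'n^'n)"
  using bilinear_conv_bounded_bilinear bilinear_matmul by blast

lemma evol_unique:
  fixes T1 T2 :: "real \<Rightarrow> real \<Rightarrow> real^'n^'n"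
  assumes contB: "continuous_on {1..} B" and e1: "evol_family B T1" and e2: "evol_family B T2"
    and t: "t \<ge> 1" and s: "s \<ge> 1"
  shows "T1 t s = T2 t s"
proof -
  let ?Z = "\<lambda>u. T1 u s - T2 u s"
  have "?Z t = 0"
  proof (rule ode_zero[OF contB _ s _ t])
    fix u :: real assume u: "u \<ge> 1"
    have "(?Z has_vector_derivative (B u ** T1 u s - B u ** T2 u s)) (at u within {1..})"
      using e1 e2 s u unfolding evol_family_def by (intro has_vector_derivative_diff) auto
    then show "(?Z has_vector_derivative B u ** ?Z u) (at u within {1..})"
      by (simp add: mm_diff_l)
  next
    show "?Z s = 0" using e1 e2 s unfolding evol_family_def by simp
  qed
  then show ?thesis by simp
qed

lemma evol_cocycle:
  fixes T :: "real \<Rightarrow> real \<Rightarrow> real^'n^'n"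
  assumes contB: "continuous_on {1..} B" and e: "evol_family B T"
    and t: "t \<ge> 1" and s: "s \<ge> 1" and r: "r \<ge> 1"
  shows "T t s ** T s r = T t r"
proof -
  let ?Z = "\<lambda>u. T u s ** T s r - T u r"
  have "?Z t = 0"
  proof (rule ode_zero[OF contB _ s _ t])
    fix u :: real assume u: "u \<ge> 1"
    have d1: "((\<lambda>u. T u s) has_vector_derivative (B u ** T u s)) (at u within {1..})"
      using e s u unfolding evol_family_def by auto
    have d2: "((\<lambda>u. T u r) has_vector_derivative (B u ** T u r)) (at u within {1..})"
      using e r u unfolding evol_family_def by auto
    have d3: "((\<lambda>u. T u s ** T s r) has_vector_derivative ((B u ** T u s) ** T s r)) (at u within {1..})"
      using bounded_linear.has_vector_derivative[OF bounded_bilinear.bounded_linear_left[OF bb_matmul] d1] .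
    have "(?Z has_vector_derivative ((B u ** T u s) ** T s r - B u ** T u r)) (at u within {1..})"
      by (intro has_vector_derivative_diff d3 d2)
    then show "(?Z has_vector_derivative B u ** ?Z u) (at u within {1..})"
      by (simp add: mm_diff_l matrix_mul_assoc)
  next
    show "?Z s = 0" using e s unfolding evol_family_def by simp
  qed
  then show ?thesis by simp
qed

definition Tt :: "real \<Rightarrow> (real \<Rightarrow> real \<Rightarrow> real^'n^'n) \<Rightarrow> real \<Rightarrow> real \<Rightarrow> real^'n^'n" where
  "Tt \<tau> T t s = ((t / s) powr (- \<tau>)) *\<^sub>R T t s"

lemma Tt_cocycle:
  assumes "\<And>t s r. t \<ge> 1 \<Longrightarrow> s \<ge> 1 \<Longrightarrow> r \<ge> 1 \<Longrightarrow> T t s ** T s r = T t r"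
    and "t \<ge> 1" "s \<ge> 1" "r \<ge> 1"
  shows "Tt \<tau> T t s ** Tt \<tau> T s r = Tt \<tau> T t r"
proof -
  have "(t / s) powr (- \<tau>) * (s / r) powr (- \<tau>) = (t / r) powr (- \<tau>)"
    using assms(2-4) by (simp add: powr_mult[symmetric])
  then show ?thesis using assms unfolding Tt_def
    by (simp add: matrix_scalar_ac mult.commute flip: scalar_matrix_assoc)
qed

lemma evol_shift:
  fixes T :: "real \<Rightarrow> real \<Rightarrow> real^'n^'n"
  assumes e: "evol_family A T"
  shows "evol_family (\<lambda>t. A t - (\<tau> / t) *\<^sub>R mat 1) (Tt \<tau> T)"
  unfolding evol_family_def
proof (intro allI impI conjI)
  fix s :: real assume s: "s \<ge> 1"
  show "Tt \<tau> T s s = mat 1" using e s unfolding evol_family_def Tt_def by simp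
  fix t :: real assume t: "t \<ge> 1"
  have d1: "((\<lambda>u. T u s) has_vector_derivative (A t ** T t s)) (at t within {1..})"
    using e s t unfolding evol_family_def by auto
  have d0: "((\<lambda>u. (u / s) powr (- \<tau>)) has_field_derivative
      ((- \<tau>) * (t / s) powr (- \<tau> - 1) * (1 / s))) (at t within {1..})"
    using s t by (auto intro!: derivative_eq_intros)
  have eq: "(- \<tau>) * (t / s) powr (- \<tau> - 1) * (1 / s) = - (\<tau> / t) * (t / s) powr (- \<tau>)"
    using s t by (simp add: powr_diff field_simps)
  have "((\<lambda>u. (u / s) powr (- \<tau>) *\<^sub>R T u s) has_vector_derivative
      ((t / s) powr (- \<tau>) *\<^sub>R (A t ** T t s) + ((- \<tau>) * (t / s) powr (- \<tau> - 1) * (1 / s)) *\<^sub>R T t s)) (at t within {1..})"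
    by (rule has_vector_derivative_scaleR[OF d0 d1])
  moreover have "(t / s) powr (- \<tau>) *\<^sub>R (A t ** T t s) + ((- \<tau>) * (t / s) powr (- \<tau> - 1) * (1 / s)) *\<^sub>R T t s
      = (A t - (\<tau> / t) *\<^sub>R mat 1) ** Tt \<tau> T t s"
    unfolding eq Tt_def
    by (simp add: mm_diff_r matrix_scalar_ac algebra_simps flip: scalar_matrix_assoc)
  ultimately show "((\<lambda>u. Tt \<tau> T u s) has_vector_derivative
      (A t - (\<tau> / t) *\<^sub>R mat 1) ** Tt \<tau> T t s) (at t within {1..})"
    unfolding Tt_def by simp
qed

lemma cont_shift:
  assumes "continuous_on {1..} A"
  shows "continuous_on {1..} (\<lambda>t::real. A t - (\<tau> / t) *\<^sub>R (mat 1 :: real^'n^'n))"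
  by (intro continuous_intros assms) auto

lemma spd_family_cong:
  assumes "\<And>t s. t \<ge> 1 \<Longrightarrow> s \<ge> 1 \<Longrightarrow> T1 t s = T2 t s" and "spd_family T1 N"
  shows "spd_family T2 N"
proof -
  obtain P K lam b where h: "0 < K \<and> 0 < lam \<and> lam \<le> b \<and>
        (\<forall>t\<ge>1. P t ** P t = P t) \<and>
        (\<forall>t\<ge>1. \<forall>s\<ge>1. P t ** T1 t s = T1 t s ** P s) \<and>
        (\<forall>t s x. 1 \<le> s \<and> s \<le> t \<longrightarrow>
           N t (T1 t s *v (P s *v x)) \<le> K * (t / s) powr (- lam) * N s x \<and>
           N s (T1 s t *v ((mat 1 - P t) *v x)) \<le> K * (t / s) powr (- lam) * N t x \<and>
           N t (T1 t s *v x) \<le> K * (t / s) powr b * N s x \<and>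
           N s (T1 s t *v x) \<le> K * (t / s) powr b * N t x)"
    using assms(2) unfolding spd_family_def by blast
  show ?thesis unfolding spd_family_def
  proof (rule exI[of _ P], rule exI[of _ K], rule exI[of _ lam], rule exI[of _ b], intro conjI)
    show "0 < K" "0 < lam" "lam \<le> b" "\<forall>t\<ge>1. P t ** P t = P t" using h by auto
    show "\<forall>t\<ge>1. \<forall>s\<ge>1. P t ** T2 t s = T2 t s ** P s"
    proof (intro allI impI)
      fix t s :: real assume "t \<ge> 1" "s \<ge> 1"
      then have "P t ** T1 t s = T1 t s ** P s" using h by blast
      then show "P t ** T2 t s = T2 t s ** P s" using assms(1)[of t s] \<open>t \<ge> 1\<close> \<open>s \<ge> 1\<close> by simp
    qed
    show "\<forall>t s x. 1 \<le> s \<and> s \<le> t \<longrightarrow>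
           N t (T2 t s *v (P s *v x)) \<le> K * (t / s) powr (- lam) * N s x \<and>
           N s (T2 s t *v ((mat 1 - P t) *v x)) \<le> K * (t / s) powr (- lam) * N t x \<and>
           N t (T2 t s *v x) \<le> K * (t / s) powr b * N s x \<and>
           N s (T2 s t *v x) \<le> K * (t / s) powr b * N t x"
    proof (intro allI impI)
      fix t s :: real and x assume ts: "1 \<le> s \<and> s \<le> t"
      then have e1: "T1 t s = T2 t s" and e2: "T1 s t = T2 s t" using assms(1) by auto
      show "N t (T2 t s *v (P s *v x)) \<le> K * (t / s) powr (- lam) * N s x \<and>
           N s (T2 s t *v ((mat 1 - P t) *v x)) \<le> K * (t / s) powr (- lam) * N t x \<and>
           N t (T2 t s *v x) \<le> K * (t / s) powr b * N s x \<and>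
           N s (T2 s t *v x) \<le> K * (t / s) powr b * N t x"
        using h ts unfolding e1[symmetric] e2[symmetric] by blast
    qed
  qed
qed

locale setting =
  fixes T :: "real \<Rightarrow> real \<Rightarrow> real^'n^'n" and N :: "real \<Rightarrow> real^'n \<Rightarrow> real" and K a :: real
  assumes norms: "\<And>t. t \<ge> 1 \<Longrightarrow> is_norm (N t)"
    and coc: "\<And>t s r. t \<ge> 1 \<Longrightarrow> s \<ge> 1 \<Longrightarrow> r \<ge> 1 \<Longrightarrow> T t s ** T s r = T t r"
    and ident: "\<And>s. s \<ge> 1 \<Longrightarrow> T s s = mat 1"
    and Kpos: "K > 0" and apos: "a > 0"
    and growth1: "\<And>t s x. 1 \<le> s \<Longrightarrow> s \<le> t \<Longrightarrow> N t (T t s *v x) \<le> K * (t / s) powr a * N s x"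
    and growth2: "\<And>t s x. 1 \<le> s \<Longrightarrow> s \<le> t \<Longrightarrow> N s (T s t *v x) \<le> K * (t / s) powr a * N t x"
begin

abbreviation U :: "real \<Rightarrow> real \<Rightarrow> real \<Rightarrow> real^'n^'n" where "U \<tau> \<equiv> Tt \<tau> T"

lemma Nnn: "t \<ge> 1 \<Longrightarrow> 0 \<le> N t x" using norms is_norm_nonneg by blast
lemma N0: "t \<ge> 1 \<Longrightarrow> N t 0 = 0" using norms is_norm_zero by blast
lemma Nsc: "t \<ge> 1 \<Longrightarrow> N t (c *\<^sub>R x) = \<bar>c\<bar> * N t x" using norms is_norm_scale by blast

lemma Uv: "U \<tau> t s *v x = ((t / s) powr (- \<tau>)) *\<^sub>R (T t s *v x)"
  unfolding Tt_def by (simp add: scaleR_matrix_vector_assoc)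

lemma NU: "t \<ge> 1 \<Longrightarrow> N t (U \<tau> t s *v x) = (t / s) powr (- \<tau>) * N t (T t s *v x)"
  by (simp add: Uv Nsc)

lemma U_coc: "t \<ge> 1 \<Longrightarrow> s \<ge> 1 \<Longrightarrow> r \<ge> 1 \<Longrightarrow> U \<tau> t s ** U \<tau> s r = U \<tau> t r"
  by (rule Tt_cocycle[OF coc])

lemma U_id: "s \<ge> 1 \<Longrightarrow> U \<tau> s s = mat 1"
  unfolding Tt_def using ident by simp

lemma T_inv: "t \<ge> 1 \<Longrightarrow> s \<ge> 1 \<Longrightarrow> T t s ** T s t = mat 1"
  using coc ident by simp

lemma U_shift: "t > 0 \<Longrightarrow> s > 0 \<Longrightarrow> U \<tau>' t s *v y = ((t / s) powr (\<tau> - \<tau>')) *\<^sub>R (U \<tau> t s *v y)"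
  by (simp add: Uv powr_add[symmetric])

lemma NU_shift: "t \<ge> 1 \<Longrightarrow> r \<ge> 1 \<Longrightarrow> s > 0 \<Longrightarrow> N r (U \<tau>' t s *v y) = (t / s) powr (\<tau> - \<tau>') * N r (U \<tau> t s *v y)"
  using U_shift[of t s \<tau>' y \<tau>] by (simp add: Nsc)

lemma growthU:
  assumes "1 \<le> s" "s \<le> t"
  shows "N t (U \<tau> t s *v x) \<le> K * (t / s) powr (a + \<bar>\<tau>\<bar>) * N s x"
    and "N s (U \<tau> s t *v x) \<le> K * (t / s) powr (a + \<bar>\<tau>\<bar>) * N t x"
proof -
  have ts: "1 \<le> t / s" using assms by simp
  have c1: "(t / s) powr (- \<tau>) \<le> (t / s) powr \<bar>\<tau>\<bar>" using ts by (intro powr_mono) auto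
  have "N t (U \<tau> t s *v x) = (t / s) powr (- \<tau>) * N t (T t s *v x)" using assms by (simp add: NU)
  also have "\<dots> \<le> (t / s) powr \<bar>\<tau>\<bar> * (K * (t / s) powr a * N s x)"
    using c1 growth1[OF assms] Nnn[of t "T t s *v x"] assms by (intro mult_mono) auto
  also have "\<dots> = K * (t / s) powr (a + \<bar>\<tau>\<bar>) * N s x" by (simp add: powr_add)
  finally show "N t (U \<tau> t s *v x) \<le> K * (t / s) powr (a + \<bar>\<tau>\<bar>) * N s x" .
  have c2: "(s / t) powr (- \<tau>) \<le> (t / s) powr \<bar>\<tau>\<bar>"
    using ts assms by (simp add: powr_divide powr_minus_divide) (smt (verit) c1 divide_pos_pos powr_divide powr_minus_divide powr_mono ts)
  have "N s (U \<tau> s t *v x) = (s / t) powr (- \<tau>) * N s (T s t *v x)" using assms by (simp add: NU)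
  also have "\<dots> \<le> (t / s) powr \<bar>\<tau>\<bar> * (K * (t / s) powr a * N t x)"
    using c2 growth2[OF assms] Nnn[of s "T s t *v x"] assms by (intro mult_mono) auto
  also have "\<dots> = K * (t / s) powr (a + \<bar>\<tau>\<bar>) * N t x" by (simp add: powr_add)
  finally show "N s (U \<tau> s t *v x) \<le> K * (t / s) powr (a + \<bar>\<tau>\<bar>) * N t x" .
qed

end

context setting begin

definition good :: "real \<Rightarrow> (real \<Rightarrow> real^'n^'n) \<Rightarrow> real \<Rightarrow> real \<Rightarrow> bool" where
  "good \<tau> P Kc l \<longleftrightarrow> Kc > 0 \<and> l > 0 \<and> (\<forall>t\<ge>1. P t ** P t = P t) \<and>
     (\<forall>t\<ge>1. \<forall>s\<ge>1. P t ** T t s = T t s ** P s) \<and>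
     (\<forall>t s x. 1 \<le> s \<and> s \<le> t \<longrightarrow>
        N t (U \<tau> t s *v (P s *v x)) \<le> Kc * (t / s) powr (- l) * N s x \<and>
        N s (U \<tau> s t *v ((mat 1 - P t) *v x)) \<le> Kc * (t / s) powr (- l) * N t x)"

lemma inv_U_iff:
  assumes "t \<ge> 1" "s \<ge> 1"
  shows "P t ** U \<tau> t s = U \<tau> t s ** P s \<longleftrightarrow> P t ** T t s = T t s ** P s"
proof -
  have c: "(t / s) powr (- \<tau>) \<noteq> 0" using assms by simp
  have "P t ** U \<tau> t s = (t / s) powr (- \<tau>) *\<^sub>R (P t ** T t s)"
    unfolding Tt_def by (simp add: matrix_scalar_ac scalar_matrix_assoc)
  moreover have "U \<tau> t s ** P s = (t / s) powr (- \<tau>) *\<^sub>R (T t s ** P s)"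
    unfolding Tt_def by (simp add: scalar_matrix_assoc)
  ultimately show ?thesis using c by simp
qed

lemma bound_mono':
  fixes X Kc K' e e' q N' :: real
  assumes "N' \<ge> 0" "Kc \<le> K'" "e \<le> e'" "1 \<le> q" "X \<le> Kc * q powr e * N'" "Kc \<ge> 0"
  shows "X \<le> K' * q powr e' * N'"
proof -
  have p: "q powr e \<le> q powr e'" by (rule powr_mono[OF assms(3,4)])
  have "0 \<le> K'" using assms(2,6) by linarith
  then have "Kc * q powr e \<le> K' * q powr e'"
    by (rule mult_mono[OF assms(2) p]) simp
  then have "Kc * q powr e * N' \<le> K' * q powr e' * N'" using assms(1) by (rule mult_right_mono)
  then show ?thesis using assms(5) by linarith
qed

lemma spd_iff: "spd_family (U \<tau>) N \<longleftrightarrow> (\<exists>P Kc l. good \<tau> P Kc l)"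
proof
  assume "spd_family (U \<tau>) N"
  then obtain P Kc l b where h: "0 < Kc \<and> 0 < l \<and> l \<le> b \<and>
        (\<forall>t\<ge>1. P t ** P t = P t) \<and>
        (\<forall>t\<ge>1. \<forall>s\<ge>1. P t ** U \<tau> t s = U \<tau> t s ** P s) \<and>
        (\<forall>t s x. 1 \<le> s \<and> s \<le> t \<longrightarrow>
           N t (U \<tau> t s *v (P s *v x)) \<le> Kc * (t / s) powr (- l) * N s x \<and>
           N s (U \<tau> s t *v ((mat 1 - P t) *v x)) \<le> Kc * (t / s) powr (- l) * N t x \<and>
           N t (U \<tau> t s *v x) \<le> Kc * (t / s) powr b * N s x \<and>
           N s (U \<tau> s t *v x) \<le> Kc * (t / s) powr b * N t x)"
    unfolding spd_family_def by blast
  have "good \<tau> P Kc l" unfolding good_def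
  proof (intro conjI)
    show "0 < Kc" "0 < l" "\<forall>t\<ge>1. P t ** P t = P t" using h by auto
    show "\<forall>t\<ge>1. \<forall>s\<ge>1. P t ** T t s = T t s ** P s"
    proof (intro allI impI)
      fix t s :: real assume ts: "t \<ge> 1" "s \<ge> 1"
      then have "P t ** U \<tau> t s = U \<tau> t s ** P s" using h by blast
      then show "P t ** T t s = T t s ** P s" using inv_U_iff[OF ts] by blast
    qed
    show "\<forall>t s x. 1 \<le> s \<and> s \<le> t \<longrightarrow>
        N t (U \<tau> t s *v (P s *v x)) \<le> Kc * (t / s) powr (- l) * N s x \<and>
        N s (U \<tau> s t *v ((mat 1 - P t) *v x)) \<le> Kc * (t / s) powr (- l) * N t x"
      using h by blast
  qed
  then show "\<exists>P Kc l. good \<tau> P Kc l" by blast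
next
  assume "\<exists>P Kc l. good \<tau> P Kc l"
  then obtain P Kc l where g: "good \<tau> P Kc l" by blast
  define K' where "K' = max Kc K"
  define b where "b = max l (a + \<bar>\<tau>\<bar>)"
  have gs: "Kc > 0" "l > 0" "\<forall>t\<ge>1. P t ** P t = P t" "\<forall>t\<ge>1. \<forall>s\<ge>1. P t ** T t s = T t s ** P s"
    and gb: "\<And>t s x. 1 \<le> s \<Longrightarrow> s \<le> t \<Longrightarrow>
        N t (U \<tau> t s *v (P s *v x)) \<le> Kc * (t / s) powr (- l) * N s x \<and>
        N s (U \<tau> s t *v ((mat 1 - P t) *v x)) \<le> Kc * (t / s) powr (- l) * N t x"
    using g unfolding good_def by blast+
  show "spd_family (U \<tau>) N" unfolding spd_family_def
  proof (rule exI[of _ P], rule exI[of _ K'], rule exI[of _ l], rule exI[of _ b], intro conjI)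
    show "0 < K'" "0 < l" "l \<le> b" "\<forall>t\<ge>1. P t ** P t = P t"
      using gs Kpos unfolding K'_def b_def by auto
    show "\<forall>t\<ge>1. \<forall>s\<ge>1. P t ** U \<tau> t s = U \<tau> t s ** P s"
    proof (intro allI impI)
      fix t s :: real assume ts: "t \<ge> 1" "s \<ge> 1"
      then have "P t ** T t s = T t s ** P s" using gs(4) by blast
      then show "P t ** U \<tau> t s = U \<tau> t s ** P s" using inv_U_iff[OF ts] by blast
    qed
    show "\<forall>t s x. 1 \<le> s \<and> s \<le> t \<longrightarrow>
           N t (U \<tau> t s *v (P s *v x)) \<le> K' * (t / s) powr (- l) * N s x \<and>
           N s (U \<tau> s t *v ((mat 1 - P t) *v x)) \<le> K' * (t / s) powr (- l) * N t x \<and>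
           N t (U \<tau> t s *v x) \<le> K' * (t / s) powr b * N s x \<and>
           N s (U \<tau> s t *v x) \<le> K' * (t / s) powr b * N t x"
    proof (intro allI impI conjI)
      fix t s :: real and x :: "real^'n" assume ts: "1 \<le> s \<and> s \<le> t"
      then have q: "1 \<le> t / s" by simp
      have Ns: "0 \<le> N s x" "0 \<le> N t x" using ts Nnn by auto
      have b1: "N t (U \<tau> t s *v (P s *v x)) \<le> Kc * (t / s) powr (- l) * N s x"
        and b2: "N s (U \<tau> s t *v ((mat 1 - P t) *v x)) \<le> Kc * (t / s) powr (- l) * N t x"
        using gb[of s t x] ts by auto
      show "N t (U \<tau> t s *v (P s *v x)) \<le> K' * (t / s) powr (- l) * N s x"
        by (rule bound_mono'[OF Ns(1) _ order_refl q b1]) (use gs K'_def in auto)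
      show "N s (U \<tau> s t *v ((mat 1 - P t) *v x)) \<le> K' * (t / s) powr (- l) * N t x"
        by (rule bound_mono'[OF Ns(2) _ order_refl q b2]) (use gs K'_def in auto)
      show "N t (U \<tau> t s *v x) \<le> K' * (t / s) powr b * N s x"
        by (rule bound_mono'[OF Ns(1) _ _ q growthU(1)]) (use ts Kpos K'_def b_def in auto)
      show "N s (U \<tau> s t *v x) \<le> K' * (t / s) powr b * N t x"
        by (rule bound_mono'[OF Ns(2) _ _ q growthU(2)]) (use ts Kpos K'_def b_def in auto)
    qed
  qed
qed

end

lemma zero_mv: "(0::real^'n^'m) *v x = 0"
  by (simp add: matrix_vector_mult_def vec_eq_iff)

lemma powr_le1: "1 \<le> (t::real) \<Longrightarrow> e \<le> 0 \<Longrightarrow> t powr e \<le> 1"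
  using powr_mono[of e 0 t] by simp

lemma scale_bound:
  fixes X Kc c e e' q N' :: real
  assumes "1 \<le> q" "c + e \<le> e'" "X \<le> Kc * q powr e * N'" "Kc \<ge> 0" "N' \<ge> 0"
  shows "q powr c * X \<le> Kc * q powr e' * N'"
proof -
  have "q powr c * X \<le> q powr c * (Kc * q powr e * N')"
    using assms(3) by (rule mult_left_mono) simp
  also have "\<dots> = Kc * q powr (c + e) * N'" by (simp add: powr_add)
  also have "\<dots> \<le> Kc * q powr e' * N'"
    using assms by (intro mult_right_mono mult_left_mono powr_mono) auto
  finally show ?thesis .
qed

context setting begin

definition S :: "real \<Rightarrow> (real^'n) set" where
  "S \<tau> = {x. \<exists>B. \<forall>t\<ge>1. N t (U \<tau> t 1 *v x) \<le> B}"

lemma good_parts: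
  assumes "good \<tau> P Kc l"
  shows "Kc > 0" "l > 0" "\<And>t. t \<ge> 1 \<Longrightarrow> P t ** P t = P t"
    "\<And>t s. t \<ge> 1 \<Longrightarrow> s \<ge> 1 \<Longrightarrow> P t ** T t s = T t s ** P s"
    "\<And>t s x. 1 \<le> s \<Longrightarrow> s \<le> t \<Longrightarrow> N t (U \<tau> t s *v (P s *v x)) \<le> Kc * (t / s) powr (- l) * N s x"
    "\<And>t s x. 1 \<le> s \<Longrightarrow> s \<le> t \<Longrightarrow> N s (U \<tau> s t *v ((mat 1 - P t) *v x)) \<le> Kc * (t / s) powr (- l) * N t x"
  using assms unfolding good_def by blast+

lemma goodI:
  assumes "Kc > 0" "l > 0" "\<And>t. t \<ge> 1 \<Longrightarrow> P t ** P t = P t"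
    "\<And>t s. t \<ge> 1 \<Longrightarrow> s \<ge> 1 \<Longrightarrow> P t ** T t s = T t s ** P s"
    "\<And>t s x. 1 \<le> s \<Longrightarrow> s \<le> t \<Longrightarrow> N t (U \<tau> t s *v (P s *v x)) \<le> Kc * (t / s) powr (- l) * N s x"
    "\<And>t s x. 1 \<le> s \<Longrightarrow> s \<le> t \<Longrightarrow> N s (U \<tau> s t *v ((mat 1 - P t) *v x)) \<le> Kc * (t / s) powr (- l) * N t x"
  shows "good \<tau> P Kc l"
  using assms unfolding good_def by blast

lemma S_range:
  assumes g: "good \<tau> P Kc l"
  shows "S \<tau> = range (\<lambda>y. P 1 *v y)"
proof
  note gp = good_parts[OF g]
  show "range (\<lambda>y. P 1 *v y) \<subseteq> S \<tau>"
  proof clarify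
    fix y
    have "N t (U \<tau> t 1 *v (P 1 *v y)) \<le> Kc * N 1 y" if t: "t \<ge> 1" for t
    proof -
      have "N t (U \<tau> t 1 *v (P 1 *v y)) \<le> Kc * (t / 1) powr (- l) * N 1 y" using gp(5)[of 1 t y] t by simp
      also have "\<dots> \<le> Kc * 1 * N 1 y"
        using t gp(1,2) Nnn[of 1 y] by (intro mult_right_mono mult_left_mono) (auto intro: powr_le1)
      finally show ?thesis by simp
    qed
    then show "P 1 *v y \<in> S \<tau>" unfolding S_def by blast
  qed
next
  note gp = good_parts[OF g]
  show "S \<tau> \<subseteq> range (\<lambda>y. P 1 *v y)"
  proof
    fix x assume "x \<in> S \<tau>"
    then obtain B where B: "\<And>t. t \<ge> 1 \<Longrightarrow> N t (U \<tau> t 1 *v x) \<le> B" unfolding S_def by blast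
    define y where "y = (mat 1 - P 1) *v x"
    have bnd: "N 1 y \<le> Kc * t powr (- l) * B" if t: "t \<ge> 1" for t
    proof -
      have inv: "P t ** U \<tau> t 1 = U \<tau> t 1 ** P 1" using inv_U_iff[of t 1] gp(4)[of t 1] t by simp
      have "U \<tau> 1 t ** ((mat 1 - P t) ** U \<tau> t 1) = U \<tau> 1 t ** (U \<tau> t 1 ** (mat 1 - P 1))"
        by (simp add: mm_diff_r mm_diff_l inv)
      also have "\<dots> = mat 1 - P 1" using U_coc[of 1 t 1] U_id[of 1] t by (simp add: matrix_mul_assoc)
      finally have e: "U \<tau> 1 t ** ((mat 1 - P t) ** U \<tau> t 1) = mat 1 - P 1" .
      have "y = U \<tau> 1 t *v ((mat 1 - P t) *v (U \<tau> t 1 *v x))"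
        unfolding y_def by (simp add: matrix_vector_mul_assoc e[symmetric])
      then have "N 1 y \<le> Kc * (t / 1) powr (- l) * N t (U \<tau> t 1 *v x)"
        using gp(6)[of 1 t "U \<tau> t 1 *v x"] t by simp
      also have "\<dots> \<le> Kc * t powr (- l) * B"
        using B[OF t] gp(1) by (simp add: mult_left_mono)
      finally show ?thesis .
    qed
    have lim: "((\<lambda>t. Kc * t powr (- l) * B) \<longlongrightarrow> Kc * 0 * B) at_top"
      by (intro tendsto_mult tendsto_const tendsto_neg_powr filterlim_ident) (use gp(2) in auto)
    have "N 1 y \<le> Kc * 0 * B"
      by (rule tendsto_le[OF _ lim tendsto_const]) (use bnd in \<open>auto simp: eventually_at_top_linorder\<close>)
    then have "N 1 y = 0" using Nnn[of 1 y] by simp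
    then have "y = 0" using is_norm_eq0[OF norms[of 1]] by simp
    then have "x = P 1 *v x" unfolding y_def by (simp add: matrix_vector_mult_diff_rdistrib)
    then show "x \<in> range (\<lambda>y. P 1 *v y)" by blast
  qed
qed

lemma S_mono:
  assumes "\<tau>1 \<le> \<tau>2"
  shows "S \<tau>1 \<subseteq> S \<tau>2"
proof
  fix x assume "x \<in> S \<tau>1"
  then obtain B where B: "\<And>t. t \<ge> 1 \<Longrightarrow> N t (U \<tau>1 t 1 *v x) \<le> B" unfolding S_def by blast
  have "N t (U \<tau>2 t 1 *v x) \<le> B" if t: "t \<ge> 1" for t
  proof -
    have "N t (U \<tau>2 t 1 *v x) = t powr (\<tau>1 - \<tau>2) * N t (U \<tau>1 t 1 *v x)"
      using NU_shift[of t t 1 \<tau>2 x \<tau>1] t by simp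
    also have "\<dots> \<le> 1 * N t (U \<tau>1 t 1 *v x)"
      using t assms Nnn[of t] by (intro mult_right_mono) (auto intro: powr_le1)
    also have "\<dots> \<le> B" using B[OF t] by simp
    finally show ?thesis .
  qed
  then show "x \<in> S \<tau>2" unfolding S_def by blast
qed

end

context setting begin

lemma robust:
  assumes g: "good \<tau> P Kc l" and d: "\<bar>\<tau>' - \<tau>\<bar> \<le> l / 2"
  shows "good \<tau>' P Kc (l / 2)"
proof -
  note gp = good_parts[OF g]
  have dd: "\<tau> - \<tau>' \<le> l / 2" "\<tau>' - \<tau> \<le> l / 2" using d unfolding abs_le_iff by linarith+
  show ?thesis
  proof (rule goodI)
    show "Kc > 0" "l / 2 > 0" using gp by auto
    show "P t ** P t = P t" if "t \<ge> 1" for t using gp(3) that .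
    show "P t ** T t s = T t s ** P s" if "t \<ge> 1" "s \<ge> 1" for t s using gp(4) that .
  next
    fix t s :: real and x :: "real^'n" assume ts: "1 \<le> s" "s \<le> t"
    have q: "1 \<le> t / s" using ts by simp
    have "N t (U \<tau>' t s *v (P s *v x)) = (t / s) powr (\<tau> - \<tau>') * N t (U \<tau> t s *v (P s *v x))"
      using NU_shift[of t t s \<tau>' "P s *v x" \<tau>] ts by simp
    also have "\<dots> \<le> Kc * (t / s) powr (- (l / 2)) * N s x"
      by (rule scale_bound[OF q _ gp(5)[OF ts]]) (use dd gp(1) Nnn ts in auto)
    finally show "N t (U \<tau>' t s *v (P s *v x)) \<le> Kc * (t / s) powr (- (l / 2)) * N s x" .
  next
    fix t s :: real and x :: "real^'n" assume ts: "1 \<le> s" "s \<le> t"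
    have q: "1 \<le> t / s" using ts by simp
    have "N s (U \<tau>' s t *v ((mat 1 - P t) *v x)) = (s / t) powr (\<tau> - \<tau>') * N s (U \<tau> s t *v ((mat 1 - P t) *v x))"
      using NU_shift[of s s t \<tau>' "(mat 1 - P t) *v x" \<tau>] ts by simp
    also have "(s / t) powr (\<tau> - \<tau>') = (t / s) powr (\<tau>' - \<tau>)"
      using ts by (simp add: powr_divide powr_diff field_simps)
    also have "(t / s) powr (\<tau>' - \<tau>) * N s (U \<tau> s t *v ((mat 1 - P t) *v x)) \<le> Kc * (t / s) powr (- (l / 2)) * N t x"
      by (rule scale_bound[OF q _ gp(6)[OF ts]]) (use dd gp(1) Nnn ts in auto)
    finally show "N s (U \<tau>' s t *v ((mat 1 - P t) *v x)) \<le> Kc * (t / s) powr (- (l / 2)) * N t x" .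
  qed
qed

lemma proj_formula:
  assumes g: "good \<tau> P Kc l" and s: "s \<ge> 1"
  shows "P s = T s 1 ** P 1 ** T 1 s"
proof -
  have "P s = P s ** (T s 1 ** T 1 s)" using T_inv[of s 1] s by simp
  also have "\<dots> = (P s ** T s 1) ** T 1 s" by (simp add: matrix_mul_assoc)
  also have "\<dots> = (T s 1 ** P 1) ** T 1 s" using good_parts(4)[OF g, of s 1] s by simp
  finally show ?thesis .
qed

lemma gap:
  assumes g1: "good \<tau>1 P1 K1 l1" and g2: "good \<tau>2 P2 K2 l2"
    and r: "range (\<lambda>y. P1 1 *v y) = range (\<lambda>y. P2 1 *v y)"
    and \<tau>: "\<tau>1 \<le> \<tau>" "\<tau> \<le> \<tau>2"
  shows "good \<tau> P2 (K1 * K2 + K2) (min l1 l2)"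
proof -
  note gp1 = good_parts[OF g1] and gp2 = good_parts[OF g2]
  have P11: "P1 1 ** P2 1 = P2 1"
  proof (rule matrix_eq[THEN iffD2], rule allI)
    fix x
    obtain z where z: "P2 1 *v x = P1 1 *v z" using r by (metis rangeI image_iff)
    have "P1 1 *v (P1 1 *v z) = P1 1 *v z" using gp1(3)[of 1] by (simp add: matrix_vector_mul_assoc)
    then show "(P1 1 ** P2 1) *v x = P2 1 *v x" using z by (simp add: matrix_vector_mul_assoc[symmetric])
  qed
  have P12: "P1 s ** P2 s = P2 s" if s: "s \<ge> 1" for s
  proof -
    have "P1 s ** P2 s = T s 1 ** P1 1 ** (T 1 s ** T s 1) ** P2 1 ** T 1 s"
      using proj_formula[OF g1 s] proj_formula[OF g2 s] by (simp add: matrix_mul_assoc)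
    also have "\<dots> = T s 1 ** (P1 1 ** P2 1) ** T 1 s" using T_inv[of 1 s] s by (simp add: matrix_mul_assoc)
    also have "\<dots> = P2 s" using P11 proj_formula[OF g2 s] by simp
    finally show ?thesis .
  qed
  have K1: "K1 * K2 \<le> K1 * K2 + K2" "K2 \<le> K1 * K2 + K2" using gp1(1) gp2(1) by auto
  show ?thesis
  proof (rule goodI)
    show "K1 * K2 + K2 > 0" "min l1 l2 > 0" using gp1 gp2 by (auto simp: add_pos_pos)
    show "P2 t ** P2 t = P2 t" if "t \<ge> 1" for t using gp2(3) that .
    show "P2 t ** T t s = T t s ** P2 s" if "t \<ge> 1" "s \<ge> 1" for t s using gp2(4) that .
  next
    fix t s :: real and x :: "real^'n" assume ts: "1 \<le> s" "s \<le> t"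
    have q: "1 \<le> t / s" using ts by simp
    have Nz: "N s (P2 s *v x) \<le> K2 * N s x"
      using gp2(5)[of s s x] ts U_id[of s \<tau>2] by simp
    have e: "P2 s *v x = P1 s *v (P2 s *v x)" using P12[of s] ts by (simp add: matrix_vector_mul_assoc)
    have "N t (U \<tau> t s *v (P2 s *v x)) = (t / s) powr (\<tau>1 - \<tau>) * N t (U \<tau>1 t s *v (P1 s *v (P2 s *v x)))"
      using NU_shift[of t t s \<tau> "P2 s *v x" \<tau>1] ts e by simp
    also have "\<dots> \<le> (K1 * K2) * (t / s) powr (- min l1 l2) * N s x"
    proof (rule scale_bound[OF q])
      have "N t (U \<tau>1 t s *v (P1 s *v (P2 s *v x))) \<le> K1 * (t / s) powr (- l1) * N s (P2 s *v x)"
        using gp1(5)[OF ts] .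
      also have "\<dots> \<le> K1 * (t / s) powr (- l1) * (K2 * N s x)"
        using Nz gp1(1) by (intro mult_left_mono) auto
      finally show "N t (U \<tau>1 t s *v (P1 s *v (P2 s *v x))) \<le> (K1 * K2) * (t / s) powr (- l1) * N s x"
        by (simp add: mult_ac)
    qed (use \<tau> gp1(1) gp2(1) Nnn ts in auto)
    also have "\<dots> \<le> (K1 * K2 + K2) * (t / s) powr (- min l1 l2) * N s x"
      using K1 Nnn[of s x] ts by (intro mult_right_mono) auto
    finally show "N t (U \<tau> t s *v (P2 s *v x)) \<le> (K1 * K2 + K2) * (t / s) powr (- min l1 l2) * N s x" .
  next
    fix t s :: real and x :: "real^'n" assume ts: "1 \<le> s" "s \<le> t"
    have q: "1 \<le> t / s" using ts by simp
    have "N s (U \<tau> s t *v ((mat 1 - P2 t) *v x)) = (s / t) powr (\<tau>2 - \<tau>) * N s (U \<tau>2 s t *v ((mat 1 - P2 t) *v x))"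
      using NU_shift[of s s t \<tau> "(mat 1 - P2 t) *v x" \<tau>2] ts by simp
    also have "(s / t) powr (\<tau>2 - \<tau>) = (t / s) powr (\<tau> - \<tau>2)"
      using ts by (simp add: powr_divide powr_diff field_simps)
    also have "(t / s) powr (\<tau> - \<tau>2) * N s (U \<tau>2 s t *v ((mat 1 - P2 t) *v x)) \<le> K2 * (t / s) powr (- min l1 l2) * N t x"
      by (rule scale_bound[OF q _ gp2(6)[OF ts]]) (use \<tau> gp2(1) Nnn ts in auto)
    also have "\<dots> \<le> (K1 * K2 + K2) * (t / s) powr (- min l1 l2) * N t x"
      using K1 Nnn[of t x] ts by (intro mult_right_mono) auto
    finally show "N s (U \<tau> s t *v ((mat 1 - P2 t) *v x)) \<le> (K1 * K2 + K2) * (t / s) powr (- min l1 l2) * N t x" .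
  qed
qed

lemma big:
  assumes "a < \<tau>"
  shows "good \<tau> (\<lambda>_. mat 1) K (\<tau> - a)"
proof (rule goodI)
  show "K > 0" "\<tau> - a > 0" using Kpos assms by auto
  show "mat 1 ** mat 1 = (mat 1 :: real^'n^'n)" by simp
  show "mat 1 ** T t s = T t s ** mat 1" for t s by simp
next
  fix t s :: real and x :: "real^'n" assume ts: "1 \<le> s" "s \<le> t"
  have q: "1 \<le> t / s" using ts by simp
  have "N t (U \<tau> t s *v (mat 1 *v x)) = (t / s) powr (- \<tau>) * N t (T t s *v x)"
    using NU ts by simp
  also have "\<dots> \<le> K * (t / s) powr (- (\<tau> - a)) * N s x"
    by (rule scale_bound[OF q _ growth1[OF ts]]) (use Kpos Nnn ts in auto)
  finally show "N t (U \<tau> t s *v (mat 1 *v x)) \<le> K * (t / s) powr (- (\<tau> - a)) * N s x" .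
next
  fix t s :: real and x :: "real^'n" assume ts: "1 \<le> s" "s \<le> t"
  have "N s (U \<tau> s t *v ((mat 1 - mat 1) *v x)) = 0" using N0 ts by (simp add: zero_mv)
  then show "N s (U \<tau> s t *v ((mat 1 - mat 1) *v x)) \<le> K * (t / s) powr (- (\<tau> - a)) * N t x"
    using Kpos Nnn[of t x] ts by simp
qed

lemma small:
  assumes "\<tau> < - a"
  shows "good \<tau> (\<lambda>_. 0) K (- a - \<tau>)"
proof (rule goodI)
  show "K > 0" "- a - \<tau> > 0" using Kpos assms by auto
  show "0 ** 0 = (0 :: real^'n^'n)" by (simp add: matrix_matrix_mult_def vec_eq_iff)
  show "0 ** T t s = T t s ** 0" for t s by (simp add: matrix_matrix_mult_def vec_eq_iff)
next
  fix t s :: real and x :: "real^'n" assume ts: "1 \<le> s" "s \<le> t"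
  have "N t (U \<tau> t s *v ((0::real^'n^'n) *v x)) = 0" using N0 ts by (simp add: zero_mv)
  then show "N t (U \<tau> t s *v ((0::real^'n^'n) *v x)) \<le> K * (t / s) powr (- (- a - \<tau>)) * N s x"
    using Kpos Nnn[of s x] ts by simp
next
  fix t s :: real and x :: "real^'n" assume ts: "1 \<le> s" "s \<le> t"
  have q: "1 \<le> t / s" using ts by simp
  have "N s (U \<tau> s t *v ((mat 1 - 0) *v x)) = (s / t) powr (- \<tau>) * N s (T s t *v x)"
    using NU ts by simp
  also have "(s / t) powr (- \<tau>) = (t / s) powr \<tau>"
    using ts by (simp add: powr_divide powr_minus_divide field_simps)
  also have "(t / s) powr \<tau> * N s (T s t *v x) \<le> K * (t / s) powr (- (- a - \<tau>)) * N t x"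
    by (rule scale_bound[OF q _ growth2[OF ts]]) (use Kpos Nnn ts in auto)
  finally show "N s (U \<tau> s t *v ((mat 1 - 0) *v x)) \<le> K * (t / s) powr (- (- a - \<tau>)) * N t x" .
qed

end

lemma ln_powr2: "ln (2 powr x) / ln 2 = (x::real)"
  by (simp add: ln_powr)

lemma structure_lemma:
  fixes R :: "real set" and D :: "real \<Rightarrow> nat" and d :: nat and a :: real
  assumes F1: "\<And>\<tau>. \<tau> \<in> R \<Longrightarrow> \<exists>e>0. \<forall>\<tau>'. \<bar>\<tau>' - \<tau>\<bar> < e \<longrightarrow> \<tau>' \<in> R \<and> D \<tau>' = D \<tau>"
    and F2: "\<And>\<tau>1 \<tau>2. \<tau>1 \<le> \<tau>2 \<Longrightarrow> D \<tau>1 \<le> D \<tau>2"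
    and F3: "\<And>\<tau>1 \<tau>2 \<tau>. \<tau>1 \<in> R \<Longrightarrow> \<tau>2 \<in> R \<Longrightarrow> \<tau>1 \<le> \<tau> \<Longrightarrow> \<tau> \<le> \<tau>2 \<Longrightarrow> D \<tau>1 = D \<tau>2 \<Longrightarrow> \<tau> \<in> R"
    and F4: "\<And>\<tau>. \<tau> > a \<Longrightarrow> \<tau> \<in> R \<and> D \<tau> = d"
    and F5: "\<And>\<tau>. \<tau> < - a \<Longrightarrow> \<tau> \<in> R \<and> D \<tau> = 0"
    and d: "d \<ge> 1"
  shows "\<exists>(r::nat) lo hi. 1 \<le> r \<and> r \<le> d \<and> 0 < lo 1 \<and>
       (\<forall>i\<in>{1..r}. lo i \<le> hi i) \<and> (\<forall>i\<in>{1..<r}. hi i < lo (Suc i)) \<and>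
       - R = (\<Union>i\<in>{1..r}. {ln (lo i) / ln 2 .. ln (hi i) / ln 2})"
proof -
  define L where "L = D ` R"
  have Dle: "D \<tau> \<le> d" for \<tau>
  proof -
    have "D \<tau> \<le> D (max \<tau> a + 1)" by (rule F2) simp
    also have "\<dots> = d" using F4[of "max \<tau> a + 1"] by simp
    finally show ?thesis .
  qed
  have Lsub: "L \<subseteq> {0..d}" unfolding L_def using Dle by auto
  have finL: "finite L" using Lsub finite_subset by blast
  have "D (a + 1) \<in> L" "D (- a - 1) \<in> L" unfolding L_def using F4[of "a+1"] F5[of "-a-1"] by auto
  then have dL: "d \<in> L" and zL: "0 \<in> L" using F4[of "a+1"] F5[of "-a-1"] by auto
  define xs where "xs = sorted_list_of_set L"
  define m where "m = length xs"
  have setxs: "set xs = L" unfolding xs_def using finL by simp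
  have mcard: "m = card L" unfolding m_def xs_def using finL by simp
  have sw: "sorted_wrt (<) xs" unfolding xs_def by simp
  define k where "k j = xs ! j" for j
  have kmono: "k i < k j" if "i < j" "j < m" for i j
    unfolding k_def using sorted_wrt_nth_less[OF sw that(1)] that m_def by simp
  have kmono': "i < j" if "k i < k j" "i < m" "j < m" for i j
  proof (rule ccontr)
    assume "\<not> i < j"
    then have "j \<le> i" by simp
    then have "k j \<le> k i" using kmono[of j i] that by (cases "j = i") auto
    then show False using that by simp
  qed
  define Rk where "Rk j = {\<tau> \<in> R. D \<tau> = k j}" for j
  have inL: "\<exists>j<m. D \<tau> = k j" if "\<tau> \<in> R" for \<tau>
  proof -
    have "D \<tau> \<in> set xs" using that setxs L_def by auto
    then obtain j where "j < length xs" "xs ! j = D \<tau>" by (auto simp: in_set_conv_nth)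
    then show ?thesis unfolding k_def m_def by auto
  qed
  have ne: "Rk j \<noteq> {}" if "j < m" for j
  proof -
    have "k j \<in> L" using that setxs unfolding k_def m_def by auto
    then show ?thesis unfolding Rk_def L_def by auto
  qed
  have ord: "\<sigma> < \<sigma>'" if "i < j" "j < m" "\<sigma> \<in> Rk i" "\<sigma>' \<in> Rk j" for i j \<sigma> \<sigma>'
  proof (rule ccontr)
    assume "\<not> \<sigma> < \<sigma>'"
    then have "D \<sigma>' \<le> D \<sigma>" using F2[of \<sigma>' \<sigma>] by simp
    then have "k j \<le> k i" using that unfolding Rk_def by simp
    then show False using kmono[OF that(1,2)] by simp
  qed
  have ball: "\<exists>e>0. \<sigma> + e \<in> Rk j \<and> \<sigma> - e \<in> Rk j" if sR: "\<sigma> \<in> Rk j" for \<sigma> j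
  proof -
    have "\<sigma> \<in> R" using sR unfolding Rk_def by simp
    obtain e where e: "e > 0" "\<forall>\<tau>'. \<bar>\<tau>' - \<sigma>\<bar> < e \<longrightarrow> \<tau>' \<in> R \<and> D \<tau>' = D \<sigma>"
      using F1[OF \<open>\<sigma> \<in> R\<close>] by blast
    have h1: "\<sigma> + e/2 \<in> R \<and> D (\<sigma> + e/2) = D \<sigma>" using e(2)[rule_format, of "\<sigma> + e/2"] e(1) by simp
    have h2: "\<sigma> - e/2 \<in> R \<and> D (\<sigma> - e/2) = D \<sigma>" using e(2)[rule_format, of "\<sigma> - e/2"] e(1) by simp
    have r1: "\<sigma> + e/2 \<in> Rk j" "\<sigma> - e/2 \<in> Rk j" using h1 h2 sR unfolding Rk_def by simp_all
    show ?thesis by (rule exI[of _ "e/2"]) (use e(1) r1 in simp)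
  qed
  have m2: "m \<ge> 2"
  proof -
    have "{0, d} \<subseteq> L" using dL zL by auto
    then have "card {0, d} \<le> card L" using finL by (rule card_mono[rotated])
    then show ?thesis using d mcard by simp
  qed
  have md: "m \<le> d + 1"
  proof -
    have "card L \<le> card {0..d}" using Lsub by (rule card_mono[rotated]) simp
    then show ?thesis using mcard by simp
  qed
  define r where "r = m - 1"
  define \<alpha> where "\<alpha> i = Sup (Rk (i - 1))" for i
  define \<beta> where "\<beta> i = Inf (Rk i)" for i
  have bddA: "bdd_above (Rk j)" if jm: "j + 1 < m" for j
  proof -
    obtain \<sigma>' where s: "\<sigma>' \<in> Rk (j + 1)" using ne[of "j+1"] jm by auto
    show ?thesis
    proof (rule bdd_aboveI)
      fix x assume "x \<in> Rk j"
      then show "x \<le> \<sigma>'" using ord[of j "j+1" x \<sigma>'] jm s by simp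
    qed
  qed
  have bddB: "bdd_below (Rk j)" if jm: "1 \<le> j" "j < m" for j
  proof -
    have "j - 1 < m" using jm by simp
    then obtain \<sigma> where s: "\<sigma> \<in> Rk (j - 1)" using ne[of "j-1"] by blast
    show ?thesis
    proof (rule bdd_belowI)
      fix x assume "x \<in> Rk j"
      then show "\<sigma> \<le> x" using ord[of "j - 1" j \<sigma> x] jm s by simp
    qed
  qed
  have ab: "\<alpha> i \<le> \<beta> i" if "i \<in> {1..r}" for i
  proof -
    have i: "1 \<le> i" "i < m" using that r_def m2 by auto
    show ?thesis unfolding \<alpha>_def \<beta>_def
    proof (rule cInf_greatest[OF ne[OF i(2)]])
      fix \<sigma>' assume \<sigma>': "\<sigma>' \<in> Rk i"
      show "Sup (Rk (i - 1)) \<le> \<sigma>'"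
        by (rule cSup_least[OF ne]) (use i ord[of "i - 1" i _ \<sigma>'] \<sigma>' in \<open>auto intro: less_imp_le\<close>)
    qed
  qed
  have ba: "\<beta> i < \<alpha> (Suc i)" if "i \<in> {1..<r}" for i
  proof -
    have i: "1 \<le> i" "i + 1 < m" using that r_def by auto
    obtain \<sigma> where \<sigma>: "\<sigma> \<in> Rk i" using ne[of i] i by auto
    obtain e where e: "e > 0" "\<sigma> + e \<in> Rk i" "\<sigma> - e \<in> Rk i" using ball[OF \<sigma>] by auto
    have "\<beta> i \<le> \<sigma> - e" unfolding \<beta>_def by (rule cInf_lower[OF e(3) bddB]) (use i in auto)
    also have "\<dots> < \<sigma> + e" using e by simp
    also have "\<dots> \<le> \<alpha> (Suc i)" unfolding \<alpha>_def using cSup_upper[OF e(2) bddA[OF i(2)]] by simp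
    finally show ?thesis .
  qed
  have eq: "- R = (\<Union>i\<in>{1..r}. {\<alpha> i .. \<beta> i})"
  proof
    show "- R \<subseteq> (\<Union>i\<in>{1..r}. {\<alpha> i .. \<beta> i})"
    proof
      fix \<tau> assume "\<tau> \<in> - R"
      then have nR: "\<tau> \<notin> R" by simp
      define J where "J = {j. j < m \<and> (\<exists>\<sigma>\<in>Rk j. \<sigma> < \<tau>)}"
      have finJ: "finite J" unfolding J_def by simp
      have "min \<tau> (-a) - 1 \<in> R" using F5[of "min \<tau> (-a) - 1"] by simp
      then obtain j0 where j0: "j0 < m" "D (min \<tau> (-a) - 1) = k j0" using inL by blast
      have "min \<tau> (-a) - 1 \<in> Rk j0" using j0 \<open>min \<tau> (-a) - 1 \<in> R\<close> unfolding Rk_def by simp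
      then have "j0 \<in> J" unfolding J_def using j0 by force
      then have Jne: "J \<noteq> {}" by auto
      define j where "j = Max J"
      have jJ: "j \<in> J" unfolding j_def using finJ Jne by simp
      have jmax: "j' \<le> j" if "j' \<in> J" for j' unfolding j_def using finJ that by simp
      have jm: "j < m" using jJ unfolding J_def by simp
      have below: "\<sigma> < \<tau>" if "\<sigma> \<in> Rk j" for \<sigma>
      proof (rule ccontr)
        assume "\<not> \<sigma> < \<tau>"
        then have "\<tau> \<le> \<sigma>" by simp
        obtain \<sigma>0 where "\<sigma>0 \<in> Rk j" "\<sigma>0 < \<tau>" using jJ unfolding J_def by auto
        then have "\<tau> \<in> R" using F3[of \<sigma>0 \<sigma> \<tau>] that \<open>\<tau> \<le> \<sigma>\<close> unfolding Rk_def by auto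
        then show False using nR by simp
      qed
      have "max \<tau> a + 1 \<in> R" using F4[of "max \<tau> a + 1"] by simp
      then obtain j1 where j1: "j1 < m" "D (max \<tau> a + 1) = k j1" using inL by blast
      have s1: "max \<tau> a + 1 \<in> Rk j1" using j1 \<open>max \<tau> a + 1 \<in> R\<close> unfolding Rk_def by simp
      have "j < j1"
      proof (rule ccontr)
        assume "\<not> j < j1"
        then have "j1 \<le> j" by simp
        show False
        proof (cases "j1 = j")
          case True
          then show ?thesis using below[of "max \<tau> a + 1"] s1 by simp
        next
          case False
          then have "j1 < j" using \<open>j1 \<le> j\<close> by simp
          obtain \<sigma> where "\<sigma> \<in> Rk j" using ne[OF jm] by auto
          then have "max \<tau> a + 1 < \<sigma>" using ord[OF \<open>j1 < j\<close> jm s1] by simp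
          then show False using below[OF \<open>\<sigma> \<in> Rk j\<close>] by simp
        qed
      qed
      then have j1m: "j + 1 < m" using j1 by simp
      define i where "i = j + 1"
      have iR: "i \<in> {1..r}" unfolding i_def r_def using j1m by simp
      have "\<alpha> i \<le> \<tau>" unfolding \<alpha>_def i_def
        by (simp, rule cSup_least[OF ne[OF jm]]) (use below in \<open>auto intro: less_imp_le\<close>)
      moreover have "\<tau> \<le> \<beta> i" unfolding \<beta>_def i_def
      proof (rule cInf_greatest[OF ne[OF j1m]])
        fix \<sigma> assume \<sigma>: "\<sigma> \<in> Rk (j + 1)"
        show "\<tau> \<le> \<sigma>"
        proof (rule ccontr)
          assume "\<not> \<tau> \<le> \<sigma>"
          then have "j + 1 \<in> J" unfolding J_def using \<sigma> j1m by force
          then show False using jmax by fastforce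
        qed
      qed
      ultimately show "\<tau> \<in> (\<Union>i\<in>{1..r}. {\<alpha> i .. \<beta> i})" using iR by auto
    qed
  next
    show "(\<Union>i\<in>{1..r}. {\<alpha> i .. \<beta> i}) \<subseteq> - R"
    proof clarify
      fix i \<tau> assume iR: "i \<in> {1..r}" and \<tau>: "\<tau> \<in> {\<alpha> i .. \<beta> i}" and tR: "\<tau> \<in> R"
      have i: "1 \<le> i" "i < m" using iR r_def m2 by auto
      obtain j' where j': "j' < m" "D \<tau> = k j'" using inL[OF tR] by blast
      have tj: "\<tau> \<in> Rk j'" using tR j' unfolding Rk_def by simp
      show False
      proof (cases "j' < i")
        case True
        then have "j' \<le> i - 1" by simp
        show False
        proof (cases "j' = i - 1")
          case True
          obtain e where e: "e > 0" "\<tau> + e \<in> Rk (i - 1)" using ball[OF tj] True by auto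
          have "\<tau> + e \<le> \<alpha> i" unfolding \<alpha>_def by (rule cSup_upper[OF e(2) bddA]) (use i in auto)
          then show False using \<tau> e by simp
        next
          case False
          then have "j' < i - 1" using \<open>j' \<le> i - 1\<close> by simp
          have "i - 1 < m" using i by simp
          then obtain \<sigma> where \<sigma>: "\<sigma> \<in> Rk (i - 1)" using ne[of "i - 1"] by blast
          have "\<tau> < \<sigma>" using ord[OF \<open>j' < i - 1\<close> _ tj \<sigma>] i by simp
          also have "\<sigma> \<le> \<alpha> i" unfolding \<alpha>_def by (rule cSup_upper[OF \<sigma> bddA]) (use i in auto)
          finally show False using \<tau> by simp
        qed
      next
        case False
        then have "i \<le> j'" by simp
        show False
        proof (cases "j' = i")
          case True
          obtain e where e: "e > 0" "\<tau> - e \<in> Rk i" using ball[OF tj] True by auto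
          have "\<beta> i \<le> \<tau> - e" unfolding \<beta>_def by (rule cInf_lower[OF e(2) bddB]) (use i in auto)
          then show False using \<tau> e by simp
        next
          case False
          then have "i < j'" using \<open>i \<le> j'\<close> by simp
          obtain \<sigma> where \<sigma>: "\<sigma> \<in> Rk i" using ne[of i] i by auto
          have "\<sigma> < \<tau>" using ord[OF \<open>i < j'\<close> j'(1) \<sigma> tj] by simp
          moreover have "\<beta> i \<le> \<sigma>" unfolding \<beta>_def by (rule cInf_lower[OF \<sigma> bddB]) (use i in auto)
          ultimately show False using \<tau> by simp
        qed
      qed
    qed
  qed
  define lo where "lo i = 2 powr (\<alpha> i)" for i
  define hi where "hi i = 2 powr (\<beta> i)" for i
  show ?thesis
  proof (rule exI[of _ r], rule exI[of _ lo], rule exI[of _ hi], intro conjI)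
    show "1 \<le> r" "r \<le> d" using m2 md r_def by auto
    show "0 < lo 1" unfolding lo_def by simp
    show "\<forall>i\<in>{1..r}. lo i \<le> hi i" unfolding lo_def hi_def using ab by simp
    show "\<forall>i\<in>{1..<r}. hi i < lo (Suc i)" unfolding lo_def hi_def using ba by simp
    show "- R = (\<Union>i\<in>{1..r}. {ln (lo i) / ln 2 .. ln (hi i) / ln 2})"
      unfolding lo_def hi_def ln_powr2 using eq .
  qed
qed

context setting begin

definition Rset :: "real set" where "Rset = {\<tau>. \<exists>P Kc l. good \<tau> P Kc l}"
definition Dm :: "real \<Rightarrow> nat" where "Dm \<tau> = dim (S \<tau>)"

lemma subspace_range_mv: "subspace (range (\<lambda>y. (P::real^'n^'n) *v y))"
proof -
  have "subspace ((\<lambda>y. P *v y) ` UNIV)"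
    by (rule linear_subspace_image) (auto simp: matrix_vector_mul_linear)
  then show ?thesis by simp
qed

lemma F1: "\<tau> \<in> Rset \<Longrightarrow> \<exists>e>0. \<forall>\<tau>'. \<bar>\<tau>' - \<tau>\<bar> < e \<longrightarrow> \<tau>' \<in> Rset \<and> Dm \<tau>' = Dm \<tau>"
proof -
  assume "\<tau> \<in> Rset"
  then obtain P Kc l where g: "good \<tau> P Kc l" unfolding Rset_def by blast
  have l: "l > 0" using good_parts(2)[OF g] .
  show ?thesis
  proof (rule exI[of _ "l / 2"], intro conjI allI impI)
    show "l / 2 > 0" using l by simp
    fix \<tau>' assume "\<bar>\<tau>' - \<tau>\<bar> < l / 2"
    then have g': "good \<tau>' P Kc (l / 2)" using robust[OF g] by simp
    then show "\<tau>' \<in> Rset" unfolding Rset_def by blast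
    show "Dm \<tau>' = Dm \<tau>" unfolding Dm_def using S_range[OF g] S_range[OF g'] by simp
  qed
qed

lemma F2: "\<tau>1 \<le> \<tau>2 \<Longrightarrow> Dm \<tau>1 \<le> Dm \<tau>2"
  unfolding Dm_def by (intro dim_subset S_mono)

lemma F3:
  assumes "\<tau>1 \<in> Rset" "\<tau>2 \<in> Rset" "\<tau>1 \<le> \<tau>" "\<tau> \<le> \<tau>2" "Dm \<tau>1 = Dm \<tau>2"
  shows "\<tau> \<in> Rset"
proof -
  obtain P1 K1 l1 where g1: "good \<tau>1 P1 K1 l1" using assms(1) unfolding Rset_def by blast
  obtain P2 K2 l2 where g2: "good \<tau>2 P2 K2 l2" using assms(2) unfolding Rset_def by blast
  have "S \<tau>1 = S \<tau>2"
  proof (rule subspace_dim_equal)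
    show "subspace (S \<tau>1)" "subspace (S \<tau>2)"
      using S_range[OF g1] S_range[OF g2] subspace_range_mv by simp_all
    show "S \<tau>1 \<subseteq> S \<tau>2" using S_mono assms(3,4) by simp
    show "dim (S \<tau>2) \<le> dim (S \<tau>1)" using assms(5) unfolding Dm_def by simp
  qed
  then have "range (\<lambda>y. P1 1 *v y) = range (\<lambda>y. P2 1 *v y)"
    using S_range[OF g1] S_range[OF g2] by simp
  then have "good \<tau> P2 (K1 * K2 + K2) (min l1 l2)" using gap[OF g1 g2] assms(3,4) by blast
  then show ?thesis unfolding Rset_def by blast
qed

lemma F4: "\<tau> > a \<Longrightarrow> \<tau> \<in> Rset \<and> Dm \<tau> = CARD('n)"
proof -
  assume "\<tau> > a"
  then have g: "good \<tau> (\<lambda>_. mat 1) K (\<tau> - a)" by (rule big)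
  have "S \<tau> = UNIV" using S_range[OF g] by simp
  then have "Dm \<tau> = CARD('n)" unfolding Dm_def by simp
  then show ?thesis using g unfolding Rset_def by blast
qed

lemma F5: "\<tau> < - a \<Longrightarrow> \<tau> \<in> Rset \<and> Dm \<tau> = 0"
proof -
  assume "\<tau> < - a"
  then have g: "good \<tau> (\<lambda>_. 0) K (- a - \<tau>)" by (rule small)
  have "S \<tau> = {0}" using S_range[OF g] by (auto simp: zero_mv)
  then have "Dm \<tau> = 0" unfolding Dm_def using dim_eq_0 by blast
  then show ?thesis using g unfolding Rset_def by blast
qed

lemma spectrum_structure:
  "\<exists>(r::nat) lo hi. 1 \<le> r \<and> r \<le> CARD('n) \<and> 0 < lo 1 \<and>
       (\<forall>i\<in>{1..r}. lo i \<le> hi i) \<and> (\<forall>i\<in>{1..<r}. hi i < lo (Suc i)) \<and>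
       - Rset = (\<Union>i\<in>{1..r}. {ln (lo i) / ln 2 .. ln (hi i) / ln 2})"
proof (rule structure_lemma[where D = Dm and a = a])
  show "\<And>\<tau>. \<tau> \<in> Rset \<Longrightarrow> \<exists>e>0. \<forall>\<tau>'. \<bar>\<tau>' - \<tau>\<bar> < e \<longrightarrow> \<tau>' \<in> Rset \<and> Dm \<tau>' = Dm \<tau>"
    by (rule F1)
  show "\<And>\<tau>1 \<tau>2. \<tau>1 \<le> \<tau>2 \<Longrightarrow> Dm \<tau>1 \<le> Dm \<tau>2" by (rule F2)
  show "\<And>\<tau>1 \<tau>2 \<tau>. \<tau>1 \<in> Rset \<Longrightarrow> \<tau>2 \<in> Rset \<Longrightarrow> \<tau>1 \<le> \<tau> \<Longrightarrow> \<tau> \<le> \<tau>2 \<Longrightarrow> Dm \<tau>1 = Dm \<tau>2 \<Longrightarrow> \<tau> \<in> Rset"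
    by (rule F3)
  show "\<And>\<tau>. \<tau> > a \<Longrightarrow> \<tau> \<in> Rset \<and> Dm \<tau> = CARD('n)" by (rule F4)
  show "\<And>\<tau>. \<tau> < - a \<Longrightarrow> \<tau> \<in> Rset \<and> Dm \<tau> = 0" by (rule F5)
  show "CARD('n) \<ge> 1" by simp
qed

lemma Rset_spd: "Rset = {\<tau>. spd_family (U \<tau>) N}"
  unfolding Rset_def using spd_iff by blast

end

lemma inv_unique_mi:
  fixes A B :: "real^'n^'n"
  assumes "A ** B = mat 1" "B ** A = mat 1"
  shows "matrix_inv A = B"
proof -
  have ex: "\<exists>A'. A ** A' = mat 1 \<and> A' ** A = mat 1" using assms by blast
  define C where "C = matrix_inv A"
  have C: "A ** C = mat 1 \<and> C ** A = mat 1"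
    unfolding C_def matrix_inv_def by (rule someI_ex[OF ex])
  have "C = C ** (A ** B)" using assms(1) by simp
  also have "\<dots> = (C ** A) ** B" by (simp add: matrix_mul_assoc)
  also have "\<dots> = B" using C by simp
  finally show ?thesis unfolding C_def .
qed

context setting begin

definition As :: "real \<Rightarrow> nat \<Rightarrow> real^'n^'n" where "As \<tau> n = U \<tau> (real n + 1) (real n)"

lemma fwd_As: "n \<ge> 1 \<Longrightarrow> fwd (As \<tau>) n k = U \<tau> (real (n + k)) (real n)"
proof (induction k)
  case 0
  then show ?case using U_id[of "real n" \<tau>] by simp
next
  case (Suc k)
  have "fwd (As \<tau>) n (Suc k) = As \<tau> (n + k) ** fwd (As \<tau>) n k" by simp
  also have "\<dots> = U \<tau> (real (n + k) + 1) (real (n + k)) ** U \<tau> (real (n + k)) (real n)"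
    by (simp only: As_def[of \<tau> "n + k"] Suc.IH[OF Suc.prems])
  also have "\<dots> = U \<tau> (real (n + Suc k)) (real n)"
    using U_coc[of "real (n + k) + 1" "real (n + k)" "real n" \<tau>] Suc.prems by (simp add: add_ac)
  finally show ?case .
qed

lemma inv_As: "j \<ge> 1 \<Longrightarrow> matrix_inv (As \<tau> j) = U \<tau> (real j) (real j + 1)"
  unfolding As_def
  by (rule inv_unique_mi) (use U_coc[of "real j + 1" "real j" "real j + 1" \<tau>] U_coc[of "real j" "real j + 1" "real j" \<tau>] U_id in auto)

lemma bwd_As: "m \<ge> 1 \<Longrightarrow> bwd (As \<tau>) m k = U \<tau> (real m) (real (m + k))"
proof (induction k)
  case 0
  then show ?case using U_id[of "real m" \<tau>] by simp
next
  case (Suc k)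
  have "bwd (As \<tau>) m (Suc k) = bwd (As \<tau>) m k ** matrix_inv (As \<tau> (m + k))" by simp
  also have "\<dots> = U \<tau> (real m) (real (m + k)) ** U \<tau> (real (m + k)) (real (m + k) + 1)"
    using Suc.prems by (simp only: Suc.IH[OF Suc.prems] inv_As[of "m + k" \<tau>])
  also have "\<dots> = U \<tau> (real m) (real (m + Suc k))"
    using U_coc[of "real m" "real (m + k)" "real (m + k) + 1" \<tau>] Suc.prems by (simp add: add_ac)
  finally show ?case .
qed

lemma cocycle_As: "m \<ge> 1 \<Longrightarrow> n \<ge> 1 \<Longrightarrow> cocycle (As \<tau>) m n = U \<tau> (real m) (real n)"
  unfolding cocycle_def using fwd_As[of n \<tau> "m - n"] bwd_As[of m \<tau> "n - m"] by auto

end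

context setting begin

lemma spd_to_seq:
  assumes "spd_family (U \<tau>) N"
  shows "seq_spd (As \<tau>) (\<lambda>n. N (real n))"
proof -
  obtain P Kc l b where h: "0 < Kc \<and> 0 < l \<and> l \<le> b \<and>
        (\<forall>t\<ge>1. P t ** P t = P t) \<and>
        (\<forall>t\<ge>1. \<forall>s\<ge>1. P t ** U \<tau> t s = U \<tau> t s ** P s) \<and>
        (\<forall>t s x. 1 \<le> s \<and> s \<le> t \<longrightarrow>
           N t (U \<tau> t s *v (P s *v x)) \<le> Kc * (t / s) powr (- l) * N s x \<and>
           N s (U \<tau> s t *v ((mat 1 - P t) *v x)) \<le> Kc * (t / s) powr (- l) * N t x \<and>
           N t (U \<tau> t s *v x) \<le> Kc * (t / s) powr b * N s x \<and>
           N s (U \<tau> s t *v x) \<le> Kc * (t / s) powr b * N t x)"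
    using assms unfolding spd_family_def by blast
  show ?thesis unfolding seq_spd_def
  proof (rule exI[of _ "\<lambda>n. P (real n)"], rule exI[of _ Kc], rule exI[of _ l], rule exI[of _ b], intro conjI allI impI)
    show "0 < Kc" "0 < l" "l \<le> b" using h by auto
  next
    fix n :: nat assume n: "1 \<le> n"
    show "P (real n) ** P (real n) = P (real n)" using h n by simp
    have "P (real n + 1) ** U \<tau> (real n + 1) (real n) = U \<tau> (real n + 1) (real n) ** P (real n)"
      using h n by simp
    then show "As \<tau> n ** P (real n) = P (real (Suc n)) ** As \<tau> n"
      unfolding As_def by (simp add: add.commute)
  next
    fix m n :: nat and x :: "real^'n" assume mn: "1 \<le> n \<and> n \<le> m"
    then have mn': "1 \<le> real n" "real n \<le> real m" by auto
    have c1: "cocycle (As \<tau>) m n = U \<tau> (real m) (real n)" and c2: "cocycle (As \<tau>) n m = U \<tau> (real n) (real m)"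
      using cocycle_As mn by auto
    have hh: "N (real m) (U \<tau> (real m) (real n) *v (P (real n) *v x)) \<le> Kc * (real m / real n) powr (- l) * N (real n) x \<and>
           N (real n) (U \<tau> (real n) (real m) *v ((mat 1 - P (real m)) *v x)) \<le> Kc * (real m / real n) powr (- l) * N (real m) x \<and>
           N (real m) (U \<tau> (real m) (real n) *v x) \<le> Kc * (real m / real n) powr b * N (real n) x \<and>
           N (real n) (U \<tau> (real n) (real m) *v x) \<le> Kc * (real m / real n) powr b * N (real m) x"
      using h mn' by blast
    show "N (real m) (cocycle (As \<tau>) m n *v (P (real n) *v x)) \<le> Kc * (real m / real n) powr - l * N (real n) x"
      "N (real n) (cocycle (As \<tau>) n m *v ((mat 1 - P (real m)) *v x)) \<le> Kc * (real m / real n) powr - l * N (real m) x"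
      "N (real m) (cocycle (As \<tau>) m n *v x) \<le> Kc * (real m / real n) powr b * N (real n) x"
      "N (real n) (cocycle (As \<tau>) n m *v x) \<le> Kc * (real m / real n) powr b * N (real m) x"
      unfolding c1 c2 using hh by auto
  qed
qed

end

definition fl :: "real \<Rightarrow> nat" where "fl t = nat \<lfloor>t\<rfloor>"

lemma fl_props:
  assumes "t \<ge> 1"
  shows "fl t \<ge> 1" "real (fl t) \<le> t" "t < real (fl t) + 1" "t \<le> 2 * real (fl t)" "real (fl t) \<ge> 1"
proof -
  have f: "\<lfloor>t\<rfloor> \<ge> 1" using assms by (simp add: le_floor_iff)
  have r: "real (fl t) = real_of_int \<lfloor>t\<rfloor>" unfolding fl_def using f by simp
  show "fl t \<ge> 1" unfolding fl_def using nat_mono[OF f] by simp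
  show "real (fl t) \<le> t" using r of_int_floor_le by simp
  show t1: "t < real (fl t) + 1" using r real_of_int_floor_add_one_gt by simp
  show "real (fl t) \<ge> 1" using r f by simp
  then show "t \<le> 2 * real (fl t)" using t1 by simp
qed

lemma fl_mono: "s \<le> t \<Longrightarrow> fl s \<le> fl t"
  unfolding fl_def by (intro nat_mono floor_mono)

lemma chain3:
  fixes X Y Z W c1 c2 c3 :: real
  assumes "X \<le> c1 * Y" "Y \<le> c2 * Z" "Z \<le> c3 * W" "c1 \<ge> 0" "c2 \<ge> 0"
  shows "X \<le> c1 * c2 * c3 * W"
proof -
  have "c1 * Y \<le> c1 * (c2 * Z)" using assms(2,4) by (rule mult_left_mono[OF _ ]) 
  moreover have "c1 * (c2 * Z) \<le> c1 * (c2 * (c3 * W))"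
    using assms(3,4,5) by (intro mult_left_mono) auto
  ultimately show ?thesis using assms(1) by (simp add: mult_ac)
qed

context setting begin

lemma ratio_bound:
  assumes "1 \<le> s" "s \<le> t" "l \<ge> 0"
  shows "(real (fl t) / real (fl s)) powr (- l) \<le> 2 powr l * (t / s) powr (- l)"
proof -
  note ft = fl_props[OF order_trans[OF assms(1,2)]] and fs = fl_props[OF assms(1)]
  have pos: "0 < (t / s) / 2" using assms by simp
  have le: "(t / s) / 2 \<le> real (fl t) / real (fl s)"
  proof -
    have "t / s \<le> 2 * real (fl t) / real (fl s)"
      using ft(4) fs(2) fs(5) assms by (simp add: frac_le)
    then show ?thesis by simp
  qed
  have "(real (fl t) / real (fl s)) powr (- l) \<le> ((t / s) / 2) powr (- l)"
    by (rule powr_mono2'[OF _ pos le]) (use assms in simp)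
  also have "\<dots> = 2 powr l * (t / s) powr (- l)"
    using assms by (simp add: powr_divide powr_minus divide_simps powr_mult)
  finally show ?thesis .
qed

lemma ratio2:
  assumes "t \<ge> 1" "b \<ge> 0"
  shows "(t / real (fl t)) powr b \<le> 2 powr b"
proof (rule powr_mono2)
  note f = fl_props[OF assms(1)]
  show "t / real (fl t) \<le> 2" using f by (simp add: divide_simps)
qed (use assms fl_props[OF assms(1)] in auto)

lemma ratio2':
  assumes "t \<ge> 1" "b \<ge> 0"
  shows "(t / real (fl t)) powr b \<ge> 0"
  by simp

lemma Uvv: "p \<ge> 1 \<Longrightarrow> q \<ge> 1 \<Longrightarrow> r \<ge> 1 \<Longrightarrow> U \<tau> p q *v (U \<tau> q r *v y) = U \<tau> p r *v y"
  using U_coc by (simp add: matrix_vector_mul_assoc)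

end

context setting begin

lemma seq_to_good:
  assumes sq: "seq_spd (As \<tau>) (\<lambda>n. N (real n))"
  shows "\<exists>P Kc l. good \<tau> P Kc l"
proof -
  obtain Pd Kd ld bd where Kd: "0 < Kd" and ld: "0 < ld"
    and hP: "\<forall>n\<ge>1. Pd n ** Pd n = Pd n \<and> As \<tau> n ** Pd n = Pd (Suc n) ** As \<tau> n"
    and hB: "\<forall>m n x. 1 \<le> n \<and> n \<le> m \<longrightarrow>
           N (real m) (cocycle (As \<tau>) m n *v (Pd n *v x)) \<le> Kd * (real m / real n) powr (- ld) * N (real n) x \<and>
           N (real n) (cocycle (As \<tau>) n m *v ((mat 1 - Pd m) *v x)) \<le> Kd * (real m / real n) powr (- ld) * N (real m) x \<and>
           N (real m) (cocycle (As \<tau>) m n *v x) \<le> Kd * (real m / real n) powr bd * N (real n) x \<and>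
           N (real n) (cocycle (As \<tau>) n m *v x) \<le> Kd * (real m / real n) powr bd * N (real m) x"
    using sq unfolding seq_spd_def by blast
  have dB1: "N (real m) (U \<tau> (real m) (real n) *v (Pd n *v x)) \<le> Kd * (real m / real n) powr (- ld) * N (real n) x"
    if "1 \<le> n" "n \<le> m" for m n x
  proof -
    have "N (real m) (cocycle (As \<tau>) m n *v (Pd n *v x)) \<le> Kd * (real m / real n) powr (- ld) * N (real n) x"
      using hB that by blast
    then show ?thesis using cocycle_As[of m n \<tau>] that by simp
  qed
  have dB2: "N (real n) (U \<tau> (real n) (real m) *v ((mat 1 - Pd m) *v x)) \<le> Kd * (real m / real n) powr (- ld) * N (real m) x"
    if "1 \<le> n" "n \<le> m" for m n x
  proof -
    have "N (real n) (cocycle (As \<tau>) n m *v ((mat 1 - Pd m) *v x)) \<le> Kd * (real m / real n) powr (- ld) * N (real m) x"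
      using hB that by blast
    then show ?thesis using cocycle_As[of n m \<tau>] that by simp
  qed
  have fwdInv: "U \<tau> (real (j + k)) (real j) ** Pd j = Pd (j + k) ** U \<tau> (real (j + k)) (real j)"
    if j: "j \<ge> 1" for j k
  proof (induction k)
    case 0
    then show ?case using U_id[of "real j" \<tau>] j by simp
  next
    case (Suc k)
    have split: "U \<tau> (real (j + Suc k)) (real j) = As \<tau> (j + k) ** U \<tau> (real (j + k)) (real j)"
      unfolding As_def using U_coc[of "real (j + k) + 1" "real (j + k)" "real j" \<tau>] j by (simp add: add_ac)
    have hk: "As \<tau> (j + k) ** Pd (j + k) = Pd (Suc (j + k)) ** As \<tau> (j + k)" using hP j by simp
    have "U \<tau> (real (j + Suc k)) (real j) ** Pd j = As \<tau> (j + k) ** (U \<tau> (real (j + k)) (real j) ** Pd j)"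
      unfolding split by (simp add: matrix_mul_assoc)
    also have "\<dots> = (As \<tau> (j + k) ** Pd (j + k)) ** U \<tau> (real (j + k)) (real j)"
      unfolding Suc.IH by (simp add: matrix_mul_assoc)
    also have "\<dots> = Pd (j + Suc k) ** (As \<tau> (j + k) ** U \<tau> (real (j + k)) (real j))"
      unfolding hk by (simp add: matrix_mul_assoc)
    also have "\<dots> = Pd (j + Suc k) ** U \<tau> (real (j + Suc k)) (real j)" unfolding split ..
    finally show ?case .
  qed
  have dInv: "U \<tau> (real i) (real j) ** Pd j = Pd i ** U \<tau> (real i) (real j)" if "i \<ge> 1" "j \<ge> 1" for i j
  proof (cases "j \<le> i")
    case True
    then show ?thesis using fwdInv[of j "i - j"] that by simp
  next
    case False
    have f: "U \<tau> (real j) (real i) ** Pd i = Pd j ** U \<tau> (real j) (real i)"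
      using fwdInv[of i "j - i"] that False by simp
    have inv1: "U \<tau> (real i) (real j) ** U \<tau> (real j) (real i) = mat 1"
      and inv2: "U \<tau> (real j) (real i) ** U \<tau> (real i) (real j) = mat 1"
      using U_coc[of "real i" "real j" "real i" \<tau>] U_coc[of "real j" "real i" "real j" \<tau>] U_id that by auto
    have "Pd i ** U \<tau> (real i) (real j) = (U \<tau> (real i) (real j) ** U \<tau> (real j) (real i)) ** Pd i ** U \<tau> (real i) (real j)"
      unfolding inv1 by simp
    also have "\<dots> = U \<tau> (real i) (real j) ** (U \<tau> (real j) (real i) ** Pd i) ** U \<tau> (real i) (real j)"
      by (simp add: matrix_mul_assoc)
    also have "\<dots> = U \<tau> (real i) (real j) ** Pd j ** (U \<tau> (real j) (real i) ** U \<tau> (real i) (real j))"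
      unfolding f by (simp add: matrix_mul_assoc)
    also have "\<dots> = U \<tau> (real i) (real j) ** Pd j" unfolding inv2 by simp
    finally show ?thesis by simp
  qed
  have dInvV: "Pd i *v (U \<tau> (real i) (real j) *v y) = U \<tau> (real i) (real j) *v (Pd j *v y)"
    if "i \<ge> 1" "j \<ge> 1" for i j y
    using dInv[OF that] by (simp add: matrix_vector_mul_assoc)
  define P where "P t = U \<tau> t (real (fl t)) ** Pd (fl t) ** U \<tau> (real (fl t)) t" for t
  have Pv: "P t *v y = U \<tau> t (real (fl t)) *v (Pd (fl t) *v (U \<tau> (real (fl t)) t *v y))" for t y
    unfolding P_def by (simp add: matrix_vector_mul_assoc matrix_mul_assoc)
  have UU: "U \<tau> p q *v (U \<tau> q p *v z) = z" if "p \<ge> 1" "q \<ge> 1" for p q z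
    using Uvv[of p q p \<tau> z] U_id[of p \<tau>] that by simp
  have PdPd: "Pd n *v (Pd n *v w) = Pd n *v w" if "n \<ge> 1" for n w
    using hP that by (simp add: matrix_vector_mul_assoc)
  define b0 where "b0 = a + \<bar>\<tau>\<bar>"
  have b0: "b0 \<ge> 0" unfolding b0_def using apos by simp
  define c2 where "c2 = 2 powr b0"
  have c2: "c2 > 0" unfolding c2_def by simp
  define Kc where "Kc = K * c2 * Kd * 2 powr ld * (K * c2)"
  have Kc: "Kc > 0" unfolding Kc_def using Kpos c2 Kd by simp
  have invU: "P t ** U \<tau> t s = U \<tau> t s ** P s" if ts: "t \<ge> 1" "s \<ge> 1" for t s
  proof (rule matrix_eq[THEN iffD2], rule allI)
    fix y
    define n where "n = fl t"
    define m where "m = fl s"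
    have n: "n \<ge> 1" "real n \<ge> 1" using fl_props[OF ts(1)] unfolding n_def by auto
    have m: "m \<ge> 1" "real m \<ge> 1" using fl_props[OF ts(2)] unfolding m_def by auto
    have "(P t ** U \<tau> t s) *v y = U \<tau> t (real n) *v (Pd n *v (U \<tau> (real n) t *v (U \<tau> t s *v y)))"
      by (simp add: Pv n_def matrix_vector_mul_assoc[symmetric])
    also have "U \<tau> (real n) t *v (U \<tau> t s *v y) = U \<tau> (real n) (real m) *v (U \<tau> (real m) s *v y)"
      using Uvv[of "real n" t s \<tau> y] Uvv[of "real n" "real m" s \<tau> y] n m ts by simp
    also have "Pd n *v (U \<tau> (real n) (real m) *v (U \<tau> (real m) s *v y)) = U \<tau> (real n) (real m) *v (Pd m *v (U \<tau> (real m) s *v y))"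
      using dInvV n m by simp
    also have "U \<tau> t (real n) *v (U \<tau> (real n) (real m) *v (Pd m *v (U \<tau> (real m) s *v y))) = U \<tau> t (real m) *v (Pd m *v (U \<tau> (real m) s *v y))"
      using Uvv n m ts by simp
    also have "\<dots> = U \<tau> t s *v (U \<tau> s (real m) *v (Pd m *v (U \<tau> (real m) s *v y)))"
      using Uvv[of t s "real m" \<tau>] m ts by simp
    also have "\<dots> = (U \<tau> t s ** P s) *v y"
      by (simp add: Pv m_def matrix_vector_mul_assoc[symmetric])
    finally show "(P t ** U \<tau> t s) *v y = (U \<tau> t s ** P s) *v y" .
  qed
  have "good \<tau> P Kc ld"
  proof (rule goodI)
    show "Kc > 0" "ld > 0" using Kc ld by auto
  next
    fix t :: real assume t: "t \<ge> 1"
    define n where "n = fl t"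
    have n: "n \<ge> 1" "real n \<ge> 1" using fl_props[OF t] unfolding n_def by auto
    show "P t ** P t = P t"
    proof (rule matrix_eq[THEN iffD2], rule allI)
      fix y
      have "(P t ** P t) *v y = U \<tau> t (real n) *v (Pd n *v (U \<tau> (real n) t *v (U \<tau> t (real n) *v (Pd n *v (U \<tau> (real n) t *v y)))))"
        by (simp add: Pv n_def matrix_vector_mul_assoc[symmetric])
      also have "\<dots> = U \<tau> t (real n) *v (Pd n *v (Pd n *v (U \<tau> (real n) t *v y)))"
        using UU n t by simp
      also have "\<dots> = P t *v y" using PdPd n by (simp add: Pv n_def)
      finally show "(P t ** P t) *v y = P t *v y" .
    qed
  next
    fix t s :: real assume ts: "t \<ge> 1" "s \<ge> 1"
    show "P t ** T t s = T t s ** P s" using invU[OF ts] inv_U_iff[OF ts] by simp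
  next
    fix t s :: real and x :: "real^'n" assume ts: "1 \<le> s" "s \<le> t"
    have t: "t \<ge> 1" using ts by simp
    define n where "n = fl t"
    define m where "m = fl s"
    have n: "n \<ge> 1" "real n \<ge> 1" "real n \<le> t" using fl_props[OF t] unfolding n_def by auto
    have m: "m \<ge> 1" "real m \<ge> 1" "real m \<le> s" using fl_props[OF ts(1)] unfolding m_def by auto
    have mn: "m \<le> n" unfolding m_def n_def using fl_mono ts by simp
    have e: "U \<tau> t s *v (P s *v x) = U \<tau> t (real n) *v (U \<tau> (real n) (real m) *v (Pd m *v (U \<tau> (real m) s *v x)))"
      using Uvv[of t s "real m" \<tau>] Uvv[of t "real n" "real m" \<tau>] n m ts by (simp add: Pv m_def)
    have s1: "N t (U \<tau> t (real n) *v (U \<tau> (real n) (real m) *v (Pd m *v (U \<tau> (real m) s *v x))))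
        \<le> (K * c2) * N (real n) (U \<tau> (real n) (real m) *v (Pd m *v (U \<tau> (real m) s *v x)))"
    proof -
      have "N t (U \<tau> t (real n) *v (U \<tau> (real n) (real m) *v (Pd m *v (U \<tau> (real m) s *v x))))
          \<le> K * (t / real n) powr b0 * N (real n) (U \<tau> (real n) (real m) *v (Pd m *v (U \<tau> (real m) s *v x)))"
        using growthU(1)[of "real n" t] n unfolding b0_def by simp
      also have "\<dots> \<le> (K * c2) * N (real n) (U \<tau> (real n) (real m) *v (Pd m *v (U \<tau> (real m) s *v x)))"
        using ratio2[OF t b0] Kpos Nnn n unfolding c2_def n_def
        by (intro mult_right_mono mult_left_mono) auto
      finally show ?thesis .
    qed
    have s2: "N (real n) (U \<tau> (real n) (real m) *v (Pd m *v (U \<tau> (real m) s *v x)))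
        \<le> (Kd * (2 powr ld * (t / s) powr (- ld))) * N (real m) (U \<tau> (real m) s *v x)"
    proof -
      have "N (real n) (U \<tau> (real n) (real m) *v (Pd m *v (U \<tau> (real m) s *v x)))
          \<le> Kd * (real n / real m) powr (- ld) * N (real m) (U \<tau> (real m) s *v x)"
        using dB1[OF m(1) mn] .
      also have "\<dots> \<le> (Kd * (2 powr ld * (t / s) powr (- ld))) * N (real m) (U \<tau> (real m) s *v x)"
        using ratio_bound[OF ts, of ld] ld Kd Nnn m unfolding n_def m_def
        by (intro mult_right_mono mult_left_mono) auto
      finally show ?thesis .
    qed
    have s3: "N (real m) (U \<tau> (real m) s *v x) \<le> (K * c2) * N s x"
    proof -
      have "N (real m) (U \<tau> (real m) s *v x) \<le> K * (s / real m) powr b0 * N s x"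
        using growthU(2)[of "real m" s] m unfolding b0_def by simp
      also have "\<dots> \<le> (K * c2) * N s x"
        using ratio2[OF ts(1) b0] Kpos Nnn ts unfolding c2_def m_def
        by (intro mult_right_mono mult_left_mono) auto
      finally show ?thesis .
    qed
    have "N t (U \<tau> t s *v (P s *v x)) \<le> (K * c2) * (Kd * (2 powr ld * (t / s) powr (- ld))) * (K * c2) * N s x"
      unfolding e by (rule chain3[OF s1 s2 s3]) (use Kpos c2 Kd in auto)
    also have "\<dots> = Kc * (t / s) powr (- ld) * N s x" unfolding Kc_def by (simp add: mult_ac)
    finally show "N t (U \<tau> t s *v (P s *v x)) \<le> Kc * (t / s) powr (- ld) * N s x" .
  next
    fix t s :: real and x :: "real^'n" assume ts: "1 \<le> s" "s \<le> t"
    have t: "t \<ge> 1" using ts by simp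
    define n where "n = fl t"
    define m where "m = fl s"
    have n: "n \<ge> 1" "real n \<ge> 1" "real n \<le> t" using fl_props[OF t] unfolding n_def by auto
    have m: "m \<ge> 1" "real m \<ge> 1" "real m \<le> s" using fl_props[OF ts(1)] unfolding m_def by auto
    have mn: "m \<le> n" unfolding m_def n_def using fl_mono ts by simp
    have e: "U \<tau> s t *v ((mat 1 - P t) *v x) = U \<tau> s (real m) *v (U \<tau> (real m) (real n) *v ((mat 1 - Pd n) *v (U \<tau> (real n) t *v x)))"
    proof -
      have "U \<tau> s t *v ((mat 1 - P t) *v x) = U \<tau> s t *v x - U \<tau> s t *v (U \<tau> t (real n) *v (Pd n *v (U \<tau> (real n) t *v x)))"
        by (simp add: matrix_vector_mult_diff_rdistrib matrix_vector_mult_diff_distrib Pv n_def)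
      also have "\<dots> = U \<tau> s t *v x - U \<tau> s (real n) *v (Pd n *v (U \<tau> (real n) t *v x))"
        using Uvv[of s t "real n" \<tau>] n ts by simp
      also have "\<dots> = U \<tau> s (real m) *v (U \<tau> (real m) (real n) *v ((mat 1 - Pd n) *v (U \<tau> (real n) t *v x)))"
        using Uvv[of s "real m" "real n" \<tau>] Uvv[of "real m" "real n" t \<tau>] Uvv[of s "real m" t \<tau>] n m ts
        by (simp add: matrix_vector_mult_diff_rdistrib matrix_vector_mult_diff_distrib)
      finally show ?thesis .
    qed
    have s1: "N s (U \<tau> s (real m) *v (U \<tau> (real m) (real n) *v ((mat 1 - Pd n) *v (U \<tau> (real n) t *v x))))
        \<le> (K * c2) * N (real m) (U \<tau> (real m) (real n) *v ((mat 1 - Pd n) *v (U \<tau> (real n) t *v x)))"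
    proof -
      have "N s (U \<tau> s (real m) *v (U \<tau> (real m) (real n) *v ((mat 1 - Pd n) *v (U \<tau> (real n) t *v x))))
          \<le> K * (s / real m) powr b0 * N (real m) (U \<tau> (real m) (real n) *v ((mat 1 - Pd n) *v (U \<tau> (real n) t *v x)))"
        using growthU(1)[of "real m" s] m unfolding b0_def by simp
      also have "\<dots> \<le> (K * c2) * N (real m) (U \<tau> (real m) (real n) *v ((mat 1 - Pd n) *v (U \<tau> (real n) t *v x)))"
        using ratio2[OF ts(1) b0] Kpos Nnn m unfolding c2_def m_def
        by (intro mult_right_mono mult_left_mono) auto
      finally show ?thesis .
    qed
    have s2: "N (real m) (U \<tau> (real m) (real n) *v ((mat 1 - Pd n) *v (U \<tau> (real n) t *v x)))
        \<le> (Kd * (2 powr ld * (t / s) powr (- ld))) * N (real n) (U \<tau> (real n) t *v x)"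
    proof -
      have "N (real m) (U \<tau> (real m) (real n) *v ((mat 1 - Pd n) *v (U \<tau> (real n) t *v x)))
          \<le> Kd * (real n / real m) powr (- ld) * N (real n) (U \<tau> (real n) t *v x)"
        using dB2[OF m(1) mn] .
      also have "\<dots> \<le> (Kd * (2 powr ld * (t / s) powr (- ld))) * N (real n) (U \<tau> (real n) t *v x)"
        using ratio_bound[OF ts, of ld] ld Kd Nnn n unfolding n_def m_def
        by (intro mult_right_mono mult_left_mono) auto
      finally show ?thesis .
    qed
    have s3: "N (real n) (U \<tau> (real n) t *v x) \<le> (K * c2) * N t x"
    proof -
      have "N (real n) (U \<tau> (real n) t *v x) \<le> K * (t / real n) powr b0 * N t x"
        using growthU(2)[of "real n" t] n unfolding b0_def by simp
      also have "\<dots> \<le> (K * c2) * N t x"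
        using ratio2[OF t b0] Kpos Nnn t unfolding c2_def n_def
        by (intro mult_right_mono mult_left_mono) auto
      finally show ?thesis .
    qed
    have "N s (U \<tau> s t *v ((mat 1 - P t) *v x)) \<le> (K * c2) * (Kd * (2 powr ld * (t / s) powr (- ld))) * (K * c2) * N t x"
      unfolding e by (rule chain3[OF s1 s2 s3]) (use Kpos c2 Kd in auto)
    also have "\<dots> = Kc * (t / s) powr (- ld) * N t x" unfolding Kc_def by (simp add: mult_ac)
    finally show "N s (U \<tau> s t *v ((mat 1 - P t) *v x)) \<le> Kc * (t / s) powr (- ld) * N t x" .
  qed
  then show ?thesis by blast
qed

end

theorem corollary5p1:
  fixes A :: "real \<Rightarrow> real^'d^'d"
    and T :: "real \<Rightarrow> real \<Rightarrow> real^'d^'d"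
    and N :: "real \<Rightarrow> real^'d \<Rightarrow> real"
    and K a :: real
  assumes contA: "continuous_on {1..} A"
    and evol: "evol_family A T"
    and norms: "\<forall>t\<ge>1. is_norm (N t)"
    and Kpos: "K > 0" and apos: "a > 0"
    and growth: "\<forall>t s x. 1 \<le> s \<and> s \<le> t \<longrightarrow>
        N t (T t s *v x) \<le> K * (t / s) powr a * N s x \<and>
        N s (T s t *v x) \<le> K * (t / s) powr a * N t x"
  shows "ode_spectrum A N = seq_spectrum (\<lambda>n. T (real n + 1) (real n)) (\<lambda>n. N (real n)) \<and>
    (\<exists>(r::nat) lo hi. 1 \<le> r \<and> r \<le> CARD('d) \<and> 0 < lo 1 \<and>
       (\<forall>i\<in>{1..r}. lo i \<le> hi i) \<and> (\<forall>i\<in>{1..<r}. hi i < lo (Suc i)) \<and>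
       ode_spectrum A N = (\<Union>i\<in>{1..r}. {ln (lo i) / ln 2 .. ln (hi i) / ln 2}))"
proof -
  interpret S: setting T N K a
  proof
    show "\<And>t. 1 \<le> t \<Longrightarrow> is_norm (N t)" using norms by blast
    show "\<And>t s r. 1 \<le> t \<Longrightarrow> 1 \<le> s \<Longrightarrow> 1 \<le> r \<Longrightarrow> T t s ** T s r = T t r"
      by (rule evol_cocycle[OF contA evol])
    show "\<And>s. 1 \<le> s \<Longrightarrow> T s s = mat 1" using evol unfolding evol_family_def by blast
    show "K > 0" "a > 0" using Kpos apos by auto
    show "\<And>t s x. 1 \<le> s \<Longrightarrow> s \<le> t \<Longrightarrow> N t (T t s *v x) \<le> K * (t / s) powr a * N s x"
      using growth by blast
    show "\<And>t s x. 1 \<le> s \<Longrightarrow> s \<le> t \<Longrightarrow> N s (T s t *v x) \<le> K * (t / s) powr a * N t x"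
      using growth by blast
  qed
  have ode_iff: "ode_spd (\<lambda>t. A t - (\<tau> / t) *\<^sub>R mat 1) N \<longleftrightarrow> spd_family (Tt \<tau> T) N" for \<tau>
  proof
    assume "ode_spd (\<lambda>t. A t - (\<tau> / t) *\<^sub>R mat 1) N"
    then obtain T' where e': "evol_family (\<lambda>t. A t - (\<tau> / t) *\<^sub>R mat 1) T'" and sp: "spd_family T' N"
      unfolding ode_spd_def by blast
    have "T' t s = Tt \<tau> T t s" if "t \<ge> 1" "s \<ge> 1" for t s
      by (rule evol_unique[OF cont_shift[OF contA] e' evol_shift[OF evol] that])
    then show "spd_family (Tt \<tau> T) N" using spd_family_cong[OF _ sp] by blast
  next
    assume "spd_family (Tt \<tau> T) N"
    then show "ode_spd (\<lambda>t. A t - (\<tau> / t) *\<^sub>R mat 1) N"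
      unfolding ode_spd_def using evol_shift[OF evol] by blast
  qed
  have ode_eq: "ode_spectrum A N = - S.Rset"
    unfolding ode_spectrum_def S.Rset_spd using ode_iff by auto
  have seq_iff: "seq_spd (\<lambda>n. ((real n + 1) / real n) powr (- \<tau>) *\<^sub>R T (real n + 1) (real n)) (\<lambda>n. N (real n))
      \<longleftrightarrow> \<tau> \<in> S.Rset" for \<tau>
  proof -
    have e: "(\<lambda>n. ((real n + 1) / real n) powr (- \<tau>) *\<^sub>R T (real n + 1) (real n)) = S.As \<tau>"
      unfolding S.As_def Tt_def by simp
    show ?thesis unfolding e
    proof
      assume "seq_spd (S.As \<tau>) (\<lambda>n. N (real n))"
      then show "\<tau> \<in> S.Rset" using S.seq_to_good unfolding S.Rset_def by blast
    next
      assume "\<tau> \<in> S.Rset"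
      then show "seq_spd (S.As \<tau>) (\<lambda>n. N (real n))" using S.spd_to_seq unfolding S.Rset_spd by blast
    qed
  qed
  have seq_eq: "seq_spectrum (\<lambda>n. T (real n + 1) (real n)) (\<lambda>n. N (real n)) = - S.Rset"
    unfolding seq_spectrum_def using seq_iff by auto
  show ?thesis using S.spectrum_structure unfolding ode_eq seq_eq by simp
qed

end
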